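(* Consider the sparse load-balancing queueing model described in the context, and let $(G_n,\mathbf z_n)_{n\in\mathbb N}$ be a sequence of (possibly random) finite graphs with maximal degree at most $d$ together with initial queue states, converging in probability in the local weak sense to a rooted marked graph $(G,\mathbf z)$. Let $\{\pi_1,\dots,\pi_K\}$ be a finite set of policies whose limiting objective values $J^{G,\mathbf z}(\pi_1),\dots,J^{G,\mathbf z}(\pi_K)$ are pairwise distinct, and let $\pi_i$ be the one with maximal limiting objective, $J^{G,\mathbf z}(\pi_i)\ge\max_j J^{G,\mathbf z}(\pi_j)$. Then there exists $n'$ such that for all $n>n'$, $$J^{G_n,\mathbf z_n}(\pi_i)\ge\max_j J^{G_n,\mathbf z_n}(\pi_j).$$
   Context: Queueing model. Fix $d,B\in\mathbb N$, $\alpha>0$, $\Delta t>0$, $\gamma\in(0,1)$. A system is given by an undirected graph $G=(\mathcal N,\mathcal E)$ of maximal degree at most $d$ (every node has at least one neighbour); each node $i$ is an agent owning one FIFO queue with buffer capacity $B$, local state $z_i\in\mathcal Z:=\{0,\dots,B\}$; $N_i$ denotes the neighbours of $i$. Time is divided into decision epochs $t=0,1,\dots$ of length $\Delta t$. A shared per-agent arrival rate $\lambda(t)>0$ evolves as a finite-state Markov chain (e.g. switching between two positive rates $\lambda_h,\lambda_l$), common to all agents. A policy is a sequence $\pi=(\pi_t)_{t\ge0}$ of decision rules $\pi_t:\mathcal Z\to[0,1]$. At the start of epoch $t$ each agent $i$ independently samples $a_i(t)\in\{0,1\}$ with $\mathbb P(a_i(t)=1)=\pi_t(z_i(t))$;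 action $0$ sends all jobs arriving at $i$ during the epoch to its own queue, action $1$ sends each to a uniformly random neighbour's queue. During epoch $t$ queue $i$ evolves for time $\Delta t$ as a continuous-time birth–death chain on $\mathcal Z$ with arrival rate $\lambda(t)\big(1-a_i(t)+\sum_{j\in N_i}a_j(t)/|N_j|\big)$ and service rate $\alpha$; an arrival finding the queue in state $B$ is dropped. $D_i(t)$ is the expected number of drops at queue $i$ during epoch $t$ given the states and actions at its start. Objectives. For finite $(G_n,\mathbf z_n)$: $J^{G_n,\mathbf z_n}(\pi)=-\mathbb E\big[\sum_{t\ge0}\gamma^t\frac1{|G_n|}\sum_{i\in G_n}D_i(t)\big]$. For the limiting rooted marked graph $(G,\varnothing,\mathbf z)$ under the same dynamics: $J^{G,\mathbf z}(\pi)=-\mathbb E\big[\sum_{t\ge0}\gamma^tD_\varnothing(t)\big]$. Local weak convergence. $\mathcal G_*$ is the space of marked rooted graphs $(G,\varnothing,\mathbf z)$; $B_k(\cdot)$ is the marked rooted $k$-hop neighbourhood of the root; $(G_n,\varnothing_n,\mathbf z_n)\to(G,\varnothing,\mathbf z)$ if for every $k$, for all large $n$ there is a mark-preserving rooted isomorphism between the $k$-hop neighbourhoods. $(G_n,\mathbf z_n)$ converges in probability in the local weak sense to $(G,\mathbf z)$ if $\frac1{|G_n|}\sum_{i\in G_n}f(C_i(G_n))\to\mathbb E[f(G,\varnothing,\mathbf z)]$ in probability for every bounded continuous $f:\mathcal G_*\to\mathbb R$, where $C_i(G_n)$ is the connected component of $i$ rooted at $i$ with marks $\mathbf z_n$.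 *)

theory Defs
  imports "HOL-Probability.Probability"
begin

text \<open>Vertices are natural numbers. A marked graph is (V, E, z): vertex set, adjacency
relation, marks (initial queue states). A marked rooted graph additionally carries a root.\<close>

type_synonym mgraph = "nat set \<times> (nat \<Rightarrow> nat \<Rightarrow> bool) \<times> (nat \<Rightarrow> nat)"
type_synonym rgraph = "nat set \<times> (nat \<Rightarrow> nat \<Rightarrow> bool) \<times> (nat \<Rightarrow> nat) \<times> nat"

definition nbrs :: "(nat \<Rightarrow> nat \<Rightarrow> bool) \<Rightarrow> nat \<Rightarrow> nat set" where
  "nbrs E i = {j. E i j}"

definition deg :: "(nat \<Rightarrow> nat \<Rightarrow> bool) \<Rightarrow> nat \<Rightarrow> nat" where
  "deg E i = card (nbrs E i)"

definition wf_lf :: "nat \<Rightarrow> mgraph \<Rightarrow> bool" where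
  "wf_lf B G = (case G of (V, E, z) \<Rightarrow>
     (\<forall>i j. E i j \<longrightarrow> i \<in> V \<and> j \<in> V) \<and> (\<forall>i j. E i j \<longrightarrow> E j i) \<and> (\<forall>i. \<not> E i i) \<and>
     (\<forall>i\<in>V. finite (nbrs E i)) \<and> (\<forall>i\<in>V. z i \<le> B))"

definition sys_graph :: "nat \<Rightarrow> nat \<Rightarrow> mgraph \<Rightarrow> bool" where
  "sys_graph d B G = (case G of (V, E, z) \<Rightarrow>
     wf_lf B (V, E, z) \<and> finite V \<and> V \<noteq> {} \<and> (\<forall>i\<in>V. nbrs E i \<noteq> {} \<and> deg E i \<le> d))"

text \<open>The space G_* of marked rooted (locally finite) graphs, as representatives.\<close>
definition Gstar_set :: "nat \<Rightarrow> rgraph set" where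
  "Gstar_set B = {(V, E, z, r). wf_lf B (V, E, z) \<and> r \<in> V}"

primrec ball :: "(nat \<Rightarrow> nat \<Rightarrow> bool) \<Rightarrow> nat \<Rightarrow> nat \<Rightarrow> nat set" where
  "ball E r 0 = {r}"
| "ball E r (Suc k) = ball E r k \<union> \<Union> (nbrs E ` ball E r k)"

definition ball_iso :: "nat \<Rightarrow> rgraph \<Rightarrow> rgraph \<Rightarrow> bool" where
  "ball_iso k G H = (case G of (V, E, z, r) \<Rightarrow> case H of (V', E', z', r') \<Rightarrow>
     (\<exists>\<phi>. bij_betw \<phi> (ball E r k) (ball E' r' k) \<and> \<phi> r = r' \<and>
        (\<forall>u\<in>ball E r k. \<forall>v\<in>ball E r k. E u v \<longleftrightarrow> E' (\<phi> u) (\<phi> v)) \<and>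
        (\<forall>u\<in>ball E r k. z' (\<phi> u) = z u)))"

definition lw_continuous :: "nat \<Rightarrow> (rgraph \<Rightarrow> real) \<Rightarrow> bool" where
  "lw_continuous B f = (\<forall>G\<in>Gstar_set B. \<forall>\<epsilon>>0. \<exists>k. \<forall>H\<in>Gstar_set B.
      ball_iso k G H \<longrightarrow> \<bar>f H - f G\<bar> < \<epsilon>)"

definition lw_bounded :: "nat \<Rightarrow> (rgraph \<Rightarrow> real) \<Rightarrow> bool" where
  "lw_bounded B f = (\<exists>C. \<forall>G\<in>Gstar_set B. \<bar>f G\<bar> \<le> C)"

text \<open>Borel sigma-algebra of the local topology (generated by the local balls).\<close>
definition Gstar_space :: "nat \<Rightarrow> rgraph measure" where
  "Gstar_space B = sigma (Gstar_set B)
     {{H \<in> Gstar_set B. ball_iso k G H} | k G. G \<in> Gstar_set B}"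

definition component :: "mgraph \<Rightarrow> nat \<Rightarrow> rgraph" where
  "component G i = (case G of (V, E, z) \<Rightarrow>
     (let C = {j. E\<^sup>*\<^sup>* i j} in (C, \<lambda>u v. E u v \<and> u \<in> C \<and> v \<in> C, z, i)))"

definition lw_avg :: "(rgraph \<Rightarrow> real) \<Rightarrow> mgraph \<Rightarrow> real" where
  "lw_avg f G = (case G of (V, E, z) \<Rightarrow> (\<Sum>i\<in>V. f (component G i)) / real (card V))"

definition lwc_prob :: "nat \<Rightarrow> (nat \<Rightarrow> mgraph pmf) \<Rightarrow> rgraph measure \<Rightarrow> bool" where
  "lwc_prob B P M = (\<forall>f. lw_continuous B f \<and> lw_bounded B f \<longrightarrow>
     (\<forall>\<epsilon>>0. (\<lambda>n. measure_pmf.prob (P n) {G. \<bar>lw_avg f G - integral\<^sup>L M f\<bar> > \<epsilon>}) \<longlonglongrightarrow> 0))"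

text \<open>Generator of the birth-death chain on {0..B}: arrival rate mu, service rate alpha;
  arrivals in state B are dropped.\<close>
definition gen :: "real \<Rightarrow> nat \<Rightarrow> real \<Rightarrow> nat \<Rightarrow> nat \<Rightarrow> real" where
  "gen \<alpha> B \<mu> x y =
     (if y = Suc x \<and> x < B then \<mu>
      else if Suc y = x \<and> x \<le> B then \<alpha>
      else if y = x \<and> x \<le> B then - ((if x < B then \<mu> else 0) + (if 0 < x then \<alpha> else 0))
      else 0)"

primrec mpow :: "(nat \<Rightarrow> nat \<Rightarrow> real) \<Rightarrow> nat \<Rightarrow> nat \<Rightarrow> nat \<Rightarrow> nat \<Rightarrow> real" where
  "mpow Q B 0 = (\<lambda>x y. if x = y then 1 else 0)"
| "mpow Q B (Suc k) = (\<lambda>x y. \<Sum>w\<in>{0..B}. mpow Q B k x w * Q w y)"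

text \<open>Transition probabilities over time s: entries of exp(s Q).\<close>
definition trans_prob :: "real \<Rightarrow> nat \<Rightarrow> real \<Rightarrow> real \<Rightarrow> nat \<Rightarrow> nat \<Rightarrow> real" where
  "trans_prob \<alpha> B \<mu> s x y = (\<Sum>k. s ^ k / fact k * mpow (gen \<alpha> B \<mu>) B k x y)"

text \<open>Expected number of dropped arrivals during time dt starting from x (arrivals are
  Poisson of rate mu, dropped when the queue is in state B).\<close>
definition exp_drops :: "real \<Rightarrow> nat \<Rightarrow> real \<Rightarrow> real \<Rightarrow> nat \<Rightarrow> real" where
  "exp_drops \<alpha> B dt \<mu> x = \<mu> * integral {0..dt} (\<lambda>s. trans_prob \<alpha> B \<mu> s x B)"

definition cfgs :: "nat \<Rightarrow> nat set \<Rightarrow> (nat \<Rightarrow> nat) set" where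
  "cfgs B T = PiE T (\<lambda>_. {0..B})"

definition acts :: "nat set \<Rightarrow> (nat \<Rightarrow> nat) set" where
  "acts T = PiE T (\<lambda>_. {0, 1})"

definition act_prob :: "(nat \<Rightarrow> nat \<Rightarrow> real) \<Rightarrow> nat \<Rightarrow> (nat \<Rightarrow> nat) \<Rightarrow> (nat \<Rightarrow> nat) \<Rightarrow> nat set \<Rightarrow> real" where
  "act_prob \<pi> t x a T = (\<Prod>j\<in>T. if a j = 1 then \<pi> t (x j) else 1 - \<pi> t (x j))"

definition inflow :: "real \<Rightarrow> (nat \<Rightarrow> nat \<Rightarrow> bool) \<Rightarrow> (nat \<Rightarrow> nat) \<Rightarrow> nat \<Rightarrow> real" where
  "inflow r E a i = r * ((1 - real (a i)) + (\<Sum>j\<in>nbrs E i. real (a j) / real (deg E j)))"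

text \<open>law ... t S l x: joint probability that lambda(t) is in state l and the queue states
  restricted to S equal x (x in cfgs B S). For finite S this is the exact marginal of the
  system's Markov chain; for S = V (finite graph) it is the full chain.\<close>
fun law :: "nat \<Rightarrow> real \<Rightarrow> real \<Rightarrow> ('l::finite \<Rightarrow> real) \<Rightarrow> ('l \<Rightarrow> 'l \<Rightarrow> real) \<Rightarrow> ('l \<Rightarrow> real)
   \<Rightarrow> (nat \<Rightarrow> nat \<Rightarrow> bool) \<Rightarrow> (nat \<Rightarrow> nat) \<Rightarrow> (nat \<Rightarrow> nat \<Rightarrow> real) \<Rightarrow> nat \<Rightarrow> nat set
   \<Rightarrow> 'l \<Rightarrow> (nat \<Rightarrow> nat) \<Rightarrow> real" where
  "law B \<alpha> dt rate lamP lam0 E z \<pi> 0 S l x = lam0 l * (if x = restrict z S then 1 else 0)"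
| "law B \<alpha> dt rate lamP lam0 E z \<pi> (Suc t) S l' x' =
    (if x' \<in> cfgs B S then
      (let T = S \<union> \<Union> (nbrs E ` S) in
       \<Sum>l\<in>UNIV. \<Sum>x\<in>cfgs B T. law B \<alpha> dt rate lamP lam0 E z \<pi> t T l x * lamP l l' *
         (\<Sum>a\<in>acts T. act_prob \<pi> t x a T *
            (\<Prod>i\<in>S. trans_prob \<alpha> B (inflow (rate l) E a i) dt (x i) (x' i))))
     else 0)"

text \<open>E[D_i(t)], computed from the law of (lambda(t), states on S), where S contains i
  and its neighbours.\<close>
definition drop_at :: "nat \<Rightarrow> real \<Rightarrow> real \<Rightarrow> ('l::finite \<Rightarrow> real) \<Rightarrow> ('l \<Rightarrow> 'l \<Rightarrow> real) \<Rightarrow> ('l \<Rightarrow> real)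
   \<Rightarrow> (nat \<Rightarrow> nat \<Rightarrow> bool) \<Rightarrow> (nat \<Rightarrow> nat) \<Rightarrow> (nat \<Rightarrow> nat \<Rightarrow> real) \<Rightarrow> nat \<Rightarrow> nat set \<Rightarrow> nat \<Rightarrow> real" where
  "drop_at B \<alpha> dt rate lamP lam0 E z \<pi> t S i =
     (\<Sum>l\<in>UNIV. \<Sum>x\<in>cfgs B S. law B \<alpha> dt rate lamP lam0 E z \<pi> t S l x *
        (\<Sum>a\<in>acts S. act_prob \<pi> t x a S * exp_drops \<alpha> B dt (inflow (rate l) E a i) (x i)))"

definition J_graph :: "nat \<Rightarrow> real \<Rightarrow> real \<Rightarrow> real \<Rightarrow> ('l::finite \<Rightarrow> real) \<Rightarrow> ('l \<Rightarrow> 'l \<Rightarrow> real)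
   \<Rightarrow> ('l \<Rightarrow> real) \<Rightarrow> mgraph \<Rightarrow> (nat \<Rightarrow> nat \<Rightarrow> real) \<Rightarrow> real" where
  "J_graph B \<alpha> dt \<gamma> rate lamP lam0 G \<pi> = (case G of (V, E, z) \<Rightarrow>
     - (\<Sum>t. \<gamma> ^ t * ((\<Sum>i\<in>V. drop_at B \<alpha> dt rate lamP lam0 E z \<pi> t V i) / real (card V))))"

definition J_root :: "nat \<Rightarrow> real \<Rightarrow> real \<Rightarrow> real \<Rightarrow> ('l::finite \<Rightarrow> real) \<Rightarrow> ('l \<Rightarrow> 'l \<Rightarrow> real)
   \<Rightarrow> ('l \<Rightarrow> real) \<Rightarrow> rgraph \<Rightarrow> (nat \<Rightarrow> nat \<Rightarrow> real) \<Rightarrow> real" where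
  "J_root B \<alpha> dt \<gamma> rate lamP lam0 G \<pi> = (case G of (V, E, z, r) \<Rightarrow>
     - (\<Sum>t. \<gamma> ^ t * drop_at B \<alpha> dt rate lamP lam0 E z \<pi> t (insert r (nbrs E r)) r))"

definition J_fin :: "nat \<Rightarrow> real \<Rightarrow> real \<Rightarrow> real \<Rightarrow> ('l::finite \<Rightarrow> real) \<Rightarrow> ('l \<Rightarrow> 'l \<Rightarrow> real)
   \<Rightarrow> ('l \<Rightarrow> real) \<Rightarrow> mgraph pmf \<Rightarrow> (nat \<Rightarrow> nat \<Rightarrow> real) \<Rightarrow> real" where
  "J_fin B \<alpha> dt \<gamma> rate lamP lam0 P \<pi> =
     measure_pmf.expectation P (\<lambda>G. J_graph B \<alpha> dt \<gamma> rate lamP lam0 G \<pi>)"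

definition J_lim :: "nat \<Rightarrow> real \<Rightarrow> real \<Rightarrow> real \<Rightarrow> ('l::finite \<Rightarrow> real) \<Rightarrow> ('l \<Rightarrow> 'l \<Rightarrow> real)
   \<Rightarrow> ('l \<Rightarrow> real) \<Rightarrow> rgraph measure \<Rightarrow> (nat \<Rightarrow> nat \<Rightarrow> real) \<Rightarrow> real" where
  "J_lim B \<alpha> dt \<gamma> rate lamP lam0 M \<pi> =
     integral\<^sup>L M (\<lambda>G. J_root B \<alpha> dt \<gamma> rate lamP lam0 G \<pi>)"

end

theory Submission
  imports Defs
begin

lemma gen_split:
  assumes "x \<le> B"
  shows "gen \<alpha> B \<mu> x y = (if y = Suc x \<and> x < B then \<mu> else 0) + (if Suc y = x then \<alpha> else 0)
     + (if y = x then - ((if x < B then \<mu> else 0) + (if 0 < x then \<alpha> else 0)) else 0)"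
  using assms by (auto simp: gen_def)

lemma gen_row0:
  assumes "x \<le> B"
  shows "(\<Sum>y\<in>{0..B}. gen \<alpha> B \<mu> x y) = 0"
proof -
  have "(\<Sum>y\<in>{0..B}. gen \<alpha> B \<mu> x y) =
    (\<Sum>y\<in>{0..B}. (if y = Suc x \<and> x < B then \<mu> else 0)) + (\<Sum>y\<in>{0..B}. (if Suc y = x then \<alpha> else 0))
     + (\<Sum>y\<in>{0..B}. (if y = x then - ((if x < B then \<mu> else 0) + (if 0 < x then \<alpha> else 0)) else 0))"
    using assms by (simp add: gen_split sum.distrib)
  also have "(\<Sum>y\<in>{0..B}. (if y = Suc x \<and> x < B then \<mu> else 0)) = (if x < B then \<mu> else 0)"
    by (cases "x < B") (simp_all add: sum.delta)
  also have "(\<Sum>y\<in>{0..B}. (if Suc y = x then \<alpha> else 0)) = (if 0 < x then \<alpha> else 0)"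
  proof (cases x)
    case 0 then show ?thesis by simp
  next
    case (Suc m)
    have "(\<Sum>y\<in>{0..B}. (if Suc y = x then \<alpha> else 0)) = (\<Sum>y\<in>{0..B}. (if y = m then \<alpha> else 0))"
      using Suc by (intro sum.cong) auto
    also have "\<dots> = \<alpha>" using Suc assms by (simp add: sum.delta)
    finally show ?thesis using Suc by simp
  qed
  also have "(\<Sum>y\<in>{0..B}. (if y = x then - ((if x < B then \<mu> else 0) + (if 0 < x then \<alpha> else 0)) else 0))
     = - ((if x < B then \<mu> else 0) + (if 0 < x then \<alpha> else 0))"
    using assms by (simp add: sum.delta)
  finally show ?thesis by linarith
qed

lemma mpow_row:
  assumes "x \<le> B"
  shows "(\<Sum>y\<in>{0..B}. mpow (gen \<alpha> B \<mu>) B k x y) = (if k = 0 then 1 else 0)"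
proof (cases k)
  case 0 then show ?thesis using assms by (simp add: sum.delta)
next
  case (Suc m)
  have "(\<Sum>y\<in>{0..B}. mpow (gen \<alpha> B \<mu>) B k x y)
      = (\<Sum>w\<in>{0..B}. mpow (gen \<alpha> B \<mu>) B m x w * (\<Sum>y\<in>{0..B}. gen \<alpha> B \<mu> w y))"
    unfolding Suc mpow.simps sum_distrib_left by (rule sum.swap)
  also have "\<dots> = 0" by (intro sum.neutral) (simp add: gen_row0)
  finally show ?thesis using Suc by simp
qed

lemma mpow_bound:
  assumes "\<And>x y. \<bar>Q x y\<bar> \<le> M"
  shows "\<bar>mpow Q B k x y\<bar> \<le> (real (Suc B) * M) ^ k"
proof (induction k arbitrary: y)
  case 0 then show ?case by simp
next
  case (Suc k)
  have M0: "M \<ge> 0" using assms[of 0 0] by linarith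
  have "\<bar>mpow Q B (Suc k) x y\<bar> \<le> (\<Sum>w\<in>{0..B}. \<bar>mpow Q B k x w * Q w y\<bar>)"
    by (simp add: sum_abs)
  also have "\<dots> \<le> (\<Sum>w\<in>{0..B}. (real (Suc B) * M) ^ k * M)"
    by (intro sum_mono) (simp add: abs_mult mult_mono Suc assms M0 del: of_nat_Suc)
  also have "\<dots> = (real (Suc B) * M) ^ Suc k" by (simp add: algebra_simps)
  finally show ?case .
qed

lemma summable_mpow:
  assumes "\<And>x y. \<bar>Q x y\<bar> \<le> M"
  shows "summable (\<lambda>k. norm (s ^ k / fact k * mpow Q B k x y))"
proof -
  define L where "L = real (Suc B) * M"
  have "summable (\<lambda>k. inverse (fact k) * (\<bar>s\<bar> * L) ^ k)"
    by (rule summable_exp)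
  then have S: "summable (\<lambda>k. (\<bar>s\<bar> * L) ^ k / fact k)"
    by (simp add: divide_inverse mult.commute)
  have "norm (s ^ k / fact k * mpow Q B k x y) \<le> (\<bar>s\<bar> * L) ^ k / fact k" for k
  proof -
    have "norm (s ^ k / fact k * mpow Q B k x y) = \<bar>s\<bar>^k / fact k * \<bar>mpow Q B k x y\<bar>"
      by (simp add: abs_mult power_abs)
    also have "\<dots> \<le> \<bar>s\<bar>^k / fact k * L ^ k"
      unfolding L_def by (intro mult_left_mono mpow_bound assms) auto
    finally show ?thesis by (simp add: power_mult_distrib)
  qed
  then show ?thesis
    by (intro summable_comparison_test[OF _ S]) auto
qed

lemma mpow_nonneg:
  assumes "\<And>x y. Q x y \<ge> 0"
  shows "mpow Q B k x y \<ge> 0"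
  by (induction k arbitrary: y) (auto intro!: sum_nonneg mult_nonneg_nonneg assms)

lemma binom_step:
  fixes f :: "nat \<Rightarrow> real" and a :: real
  shows "(\<Sum>i\<le>Suc k. real (Suc k choose i) * a^i * f (Suc k - i)) =
     (\<Sum>i\<le>k. real (k choose i) * a^i * f (Suc k - i)) + a * (\<Sum>i\<le>k. real (k choose i) * a^i * f (k - i))"
proof -
  have h1: "(\<Sum>i\<le>Suc k. real (Suc k choose i) * a^i * f (Suc k - i)) =
      f (Suc k) + (\<Sum>i\<le>k. real (Suc k choose Suc i) * a^Suc i * f (k - i))"
    by (subst sum.atMost_Suc_shift) simp
  have h2: "(\<Sum>i\<le>k. real (Suc k choose Suc i) * a^Suc i * f (k - i)) =
     (\<Sum>i\<le>k. real (k choose Suc i) * a^Suc i * f (k - i)) + (\<Sum>i\<le>k. real (k choose i) * a^Suc i * f (k - i))"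
    by (simp add: sum.distrib[symmetric] algebra_simps)
  have h3: "(\<Sum>i\<le>k. real (k choose i) * a^i * f (Suc k - i)) =
      (\<Sum>i\<le>Suc k. real (k choose i) * a^i * f (Suc k - i))"
    by simp
  have h4: "(\<Sum>i\<le>Suc k. real (k choose i) * a^i * f (Suc k - i)) = f (Suc k) + (\<Sum>i\<le>k. real (k choose Suc i) * a^Suc i * f (k - i))"
    by (subst sum.atMost_Suc_shift) simp
  have h5: "a * (\<Sum>i\<le>k. real (k choose i) * a^i * f (k - i)) = (\<Sum>i\<le>k. real (k choose i) * a^Suc i * f (k - i))"
    by (simp add: sum_distrib_left algebra_simps)
  show ?thesis unfolding h1 h2 h3 h4 h5 by simp
qed

lemma mpow_binom:
  assumes "y \<le> B"
  shows "mpow Q B k x y = (\<Sum>i\<le>k. real (k choose i) * (- c)^i * mpow (\<lambda>x y. Q x y + c * (if x = y then 1 else 0)) B (k - i) x y)"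
  using assms
proof (induction k arbitrary: y)
  case 0 then show ?case by simp
next
  case (Suc k)
  define A where "A = (\<lambda>x y. Q x y + c * (if x = y then 1 else (0::real)))"
  define f where "f = (\<lambda>j. mpow A B j x y)"
  have "mpow Q B (Suc k) x y = (\<Sum>w\<in>{0..B}. mpow Q B k x w * (A w y - c * (if w = y then 1 else 0)))"
    by (simp add: A_def)
  also have "\<dots> = (\<Sum>w\<in>{0..B}. (\<Sum>i\<le>k. real (k choose i) * (- c)^i * mpow A B (k - i) x w) * (A w y - c * (if w = y then 1 else 0)))"
    by (intro sum.cong refl) (simp add: Suc.IH A_def)
  also have "\<dots> = (\<Sum>i\<le>k. real (k choose i) * (- c)^i * (\<Sum>w\<in>{0..B}. mpow A B (k - i) x w * A w y))
       - c * (\<Sum>w\<in>{0..B}. (\<Sum>i\<le>k. real (k choose i) * (- c)^i * mpow A B (k - i) x w) * (if w = y then 1 else 0))"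
    by (simp add: algebra_simps sum_subtractf sum_distrib_left sum_distrib_right sum.swap[of _ "{..k}" "{0..B}"])
  also have "(\<Sum>w\<in>{0..B}. (\<Sum>i\<le>k. real (k choose i) * (- c)^i * mpow A B (k - i) x w) * (if w = y then 1 else 0))
       = (\<Sum>i\<le>k. real (k choose i) * (- c)^i * f (k - i))"
    using Suc.prems by (simp add: f_def sum.delta if_distrib[where f="\<lambda>z. _ * z"] cong: if_cong)
  also have "(\<Sum>i\<le>k. real (k choose i) * (- c)^i * (\<Sum>w\<in>{0..B}. mpow A B (k - i) x w * A w y))
       = (\<Sum>i\<le>k. real (k choose i) * (- c)^i * f (Suc k - i))"
    by (intro sum.cong refl) (simp add: f_def Suc_diff_le)
  finally have "mpow Q B (Suc k) x y = (\<Sum>i\<le>k. real (k choose i) * (- c)^i * f (Suc k - i))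
       + (-c) * (\<Sum>i\<le>k. real (k choose i) * (- c)^i * f (k - i))" by simp
  also have "\<dots> = (\<Sum>i\<le>Suc k. real (Suc k choose i) * (-c)^i * f (Suc k - i))"
    by (rule binom_step[symmetric])
  finally show ?case by (simp add: f_def A_def)
qed

lemma gen_abs_bound:
  assumes "\<mu> \<ge> 0" "\<alpha> \<ge> 0"
  shows "\<bar>gen \<alpha> B \<mu> x y\<bar> \<le> \<mu> + \<alpha>"
  using assms by (auto simp: gen_def)

lemma genA_nonneg:
  assumes "\<mu> \<ge> 0" "\<alpha> \<ge> 0"
  shows "gen \<alpha> B \<mu> x y + (\<mu> + \<alpha>) * (if x = y then 1 else 0) \<ge> 0"
  using assms by (auto simp: gen_def)

lemma trans_prob_nonneg:
  assumes "\<mu> \<ge> 0" "\<alpha> \<ge> 0" "s \<ge> 0" "y \<le> B"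
  shows "trans_prob \<alpha> B \<mu> s x y \<ge> 0"
proof -
  define c where "c = \<mu> + \<alpha>"
  define Q where "Q = gen \<alpha> B \<mu>"
  define A where "A = (\<lambda>x y. Q x y + c * (if x = y then 1 else (0::real)))"
  define a where "a = (\<lambda>i. (- c * s) ^ i / fact i)"
  define b where "b = (\<lambda>j. s ^ j / fact j * mpow A B j x y)"
  have Ab: "\<bar>A x y\<bar> \<le> 2 * c" for x y
    using gen_abs_bound[OF assms(1,2), of B x y] assms unfolding A_def Q_def c_def by auto
  have A0: "A x y \<ge> 0" for x y using genA_nonneg[OF assms(1,2)] unfolding A_def Q_def c_def by auto
  have sa: "summable (\<lambda>k. norm (a k))"
  proof -
    have "summable (\<lambda>k. inverse (fact k) * \<bar>- c * s\<bar> ^ k)" by (rule summable_exp)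
    then show ?thesis unfolding a_def by (simp add: divide_inverse mult.commute power_abs abs_mult)
  qed
  have sb: "summable (\<lambda>k. norm (b k))" unfolding b_def by (rule summable_mpow[OF Ab])
  have "(\<lambda>k. s ^ k / fact k * mpow Q B k x y) = (\<lambda>k. \<Sum>i\<le>k. a i * b (k - i))"
  proof
    fix k
    have "s ^ k / fact k * mpow Q B k x y = (\<Sum>i\<le>k. s ^ k / fact k * (real (k choose i) * (- c)^i * mpow A B (k - i) x y))"
      unfolding A_def by (subst mpow_binom[OF assms(4), of Q k x c]) (simp add: sum_distrib_left)
    also have "\<dots> = (\<Sum>i\<le>k. a i * b (k - i))"
    proof (intro sum.cong refl)
      fix i assume "i \<in> {..k}"
      then have ik: "i \<le> k" by simp
      have e1: "s ^ k = s ^ i * s ^ (k - i)" using ik by (simp add: power_add[symmetric])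
      have e2: "real (k choose i) = fact k / (fact i * fact (k - i))" using ik by (rule binomial_fact)
      have e3: "(- c * s)^i = (-c)^i * s^i" by (rule power_mult_distrib)
      show "s ^ k / fact k * (real (k choose i) * (- c)^i * mpow A B (k - i) x y) = a i * b (k - i)"
        unfolding a_def b_def e1 e2 e3 by (simp add: field_simps)
    qed
    finally show "s ^ k / fact k * mpow Q B k x y = (\<Sum>i\<le>k. a i * b (k - i))" .
  qed
  then have "trans_prob \<alpha> B \<mu> s x y = (\<Sum>k. \<Sum>i\<le>k. a i * b (k - i))"
    unfolding trans_prob_def Q_def by simp
  also have "\<dots> = (\<Sum>k. a k) * (\<Sum>k. b k)"
    by (rule Cauchy_product[OF sa sb, symmetric])
  also have "(\<Sum>k. a k) = exp (- c * s)"
    unfolding a_def exp_def by (simp add: divide_inverse mult.commute scaleR_conv_of_real)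
  finally have eq: "trans_prob \<alpha> B \<mu> s x y = exp (- c * s) * (\<Sum>k. b k)" .
  have "(\<Sum>k. b k) \<ge> 0"
    using summable_norm_cancel[OF sb] unfolding b_def
    by (intro suminf_nonneg) (auto intro!: mult_nonneg_nonneg divide_nonneg_nonneg mpow_nonneg A0 assms zero_le_power)
  then show ?thesis unfolding eq by simp
qed

lemma trans_prob_row:
  assumes "x \<le> B"
  shows "(\<Sum>y\<in>{0..B}. trans_prob \<alpha> B \<mu> s x y) = 1"
proof -
  have sm: "summable (\<lambda>k. s ^ k / fact k * mpow (gen \<alpha> B \<mu>) B k x y)" for y
    by (rule summable_norm_cancel, rule summable_mpow[of _ "\<bar>\<mu>\<bar> + \<bar>\<alpha>\<bar>"]) (auto simp: gen_def)
  have "(\<Sum>y\<in>{0..B}. trans_prob \<alpha> B \<mu> s x y) = (\<Sum>k. \<Sum>y\<in>{0..B}. s ^ k / fact k * mpow (gen \<alpha> B \<mu>) B k x y)"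
    unfolding trans_prob_def by (rule suminf_sum[OF sm, symmetric])
  also have "\<dots> = (\<Sum>k. if k = 0 then 1 else 0)"
  proof -
    have "(\<Sum>y\<in>{0..B}. s ^ k / fact k * mpow (gen \<alpha> B \<mu>) B k x y) = (if k = 0 then 1 else 0)" for k
      by (subst sum_distrib_left[symmetric]) (simp add: mpow_row[OF assms])
    then show ?thesis by simp
  qed
  also have "\<dots> = 1" using sums_single[of 0 "\<lambda>_. 1::real"] by (simp add: sums_iff)
  finally show ?thesis .
qed

lemma trans_prob_le1:
  assumes "\<mu> \<ge> 0" "\<alpha> \<ge> 0" "s \<ge> 0" "x \<le> B" "y \<le> B"
  shows "trans_prob \<alpha> B \<mu> s x y \<le> 1"
proof -
  have "trans_prob \<alpha> B \<mu> s x y \<le> (\<Sum>y\<in>{0..B}. trans_prob \<alpha> B \<mu> s x y)"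
    using assms by (intro member_le_sum trans_prob_nonneg) auto
  then show ?thesis using trans_prob_row[OF assms(4)] by simp
qed

lemma exp_drops_bounds:
  assumes "\<mu> \<ge> 0" "\<alpha> \<ge> 0" "dt \<ge> 0" "x \<le> B"
  shows "0 \<le> exp_drops \<alpha> B dt \<mu> x" "exp_drops \<alpha> B dt \<mu> x \<le> \<mu> * dt"
proof -
  let ?f = "\<lambda>s. trans_prob \<alpha> B \<mu> s x B"
  have "0 \<le> integral {0..dt} ?f \<and> integral {0..dt} ?f \<le> dt"
  proof (cases "?f integrable_on {0..dt}")
    case True
    have "0 \<le> integral {0..dt} ?f"
      using True assms by (intro integral_nonneg trans_prob_nonneg) auto
    moreover have "integral {0..dt} ?f \<le> integral {0..dt} (\<lambda>s. 1::real)"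
      using True assms by (intro integral_le trans_prob_le1) auto
    ultimately show ?thesis using assms by simp
  next
    case False then show ?thesis using assms by (simp add: not_integrable_integral)
  qed
  then show "0 \<le> exp_drops \<alpha> B dt \<mu> x" "exp_drops \<alpha> B dt \<mu> x \<le> \<mu> * dt"
    unfolding exp_drops_def using assms by (auto intro: mult_left_mono)
qed

lemma sum_PiE_marg:
  fixes p :: "nat \<Rightarrow> 'b \<Rightarrow> real" and h :: "(nat \<Rightarrow> 'b) \<Rightarrow> real"
  assumes U: "finite U" and SU: "S \<subseteq> U" and G: "\<And>j. j \<in> U \<Longrightarrow> finite (G j)"
    and p: "\<And>j. j \<in> U - S \<Longrightarrow> (\<Sum>v\<in>G j. p j v) = 1"
  shows "(\<Sum>x\<in>PiE U G. (\<Prod>j\<in>U-S. p j (x j)) * h (restrict x S)) = (\<Sum>y\<in>PiE S G. h y)"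
proof -
  let ?m = "\<lambda>(y::nat \<Rightarrow> 'b, w::nat \<Rightarrow> 'b). (\<lambda>i. if i \<in> S then y i else w i)"
  have "(\<Sum>x\<in>PiE U G. (\<Prod>j\<in>U-S. p j (x j)) * h (restrict x S)) =
        (\<Sum>(y, w)\<in>PiE S G \<times> PiE (U-S) G. (\<Prod>j\<in>U-S. p j (w j)) * h y)"
  proof (rule sum.reindex_bij_witness[of _ ?m "\<lambda>x. (restrict x S, restrict x (U-S))"])
    fix x assume x: "x \<in> PiE U G"
    show "?m (restrict x S, restrict x (U - S)) = x"
      using x SU by (auto simp: PiE_def extensional_def fun_eq_iff)
    show "(restrict x S, restrict x (U - S)) \<in> PiE S G \<times> PiE (U - S) G"
      using x SU by auto
    show "(case (restrict x S, restrict x (U - S)) of (y, w) \<Rightarrow> (\<Prod>j\<in>U - S. p j (w j)) * h y) =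
         (\<Prod>j\<in>U - S. p j (x j)) * h (restrict x S)"
      by simp
  next
    fix yw assume yw: "yw \<in> PiE S G \<times> PiE (U - S) G"
    obtain y w where yw': "yw = (y, w)" by (cases yw)
    with yw have y: "y \<in> PiE S G" and w: "w \<in> PiE (U-S) G" by auto
    show "(restrict (?m yw) S, restrict (?m yw) (U - S)) = yw"
      using y w unfolding yw' by (auto simp: PiE_def extensional_def fun_eq_iff restrict_def)
    show "?m yw \<in> PiE U G"
      using y w SU unfolding yw' by (auto simp: PiE_def extensional_def Pi_def)
  qed
  also have "\<dots> = (\<Sum>y\<in>PiE S G. \<Sum>w\<in>PiE (U-S) G. (\<Prod>j\<in>U-S. p j (w j)) * h y)"
    by (rule sum.cartesian_product[symmetric])
  also have "\<dots> = (\<Sum>y\<in>PiE S G. h y * (\<Sum>w\<in>PiE (U-S) G. (\<Prod>j\<in>U-S. p j (w j))))"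
    by (simp add: sum_distrib_left mult.commute)
  also have "(\<Sum>w\<in>PiE (U-S) G. (\<Prod>j\<in>U-S. p j (w j))) = (\<Prod>j\<in>U-S. \<Sum>v\<in>G j. p j v)"
    using U G by (intro prod_sum_PiE[symmetric]) auto
  also have "\<dots> = 1" using p by simp
  finally show ?thesis by (simp add: restrict_def)
qed

definition closed_dom :: "nat \<Rightarrow> (nat \<Rightarrow> nat \<Rightarrow> bool) \<Rightarrow> (nat \<Rightarrow> nat) \<Rightarrow> nat set \<Rightarrow> bool" where
  "closed_dom B E z W = (\<forall>u\<in>W. finite (nbrs E u) \<and> nbrs E u \<subseteq> W \<and> z u \<le> B)"

definition nb :: "(nat \<Rightarrow> nat \<Rightarrow> bool) \<Rightarrow> nat set \<Rightarrow> nat set" where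
  "nb E S = S \<union> \<Union> (nbrs E ` S)"

lemma law_Suc:
  "law B \<alpha> dt rate lamP lam0 E z \<pi> (Suc t) S l' x' =
    (if x' \<in> cfgs B S then
       \<Sum>l\<in>UNIV. \<Sum>x\<in>cfgs B (nb E S). law B \<alpha> dt rate lamP lam0 E z \<pi> t (nb E S) l x * lamP l l' *
         (\<Sum>a\<in>acts (nb E S). act_prob \<pi> t x a (nb E S) *
            (\<Prod>i\<in>S. trans_prob \<alpha> B (inflow (rate l) E a i) dt (x i) (x' i)))
     else 0)"
  by (simp add: nb_def Let_def)

declare law.simps(2)[simp del]

lemma nb_mono: "S \<subseteq> U \<Longrightarrow> nb E S \<subseteq> nb E U"
  by (auto simp: nb_def)

lemma nb_sub: "S \<subseteq> nb E S" by (auto simp: nb_def)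

lemma nb_closed: "closed_dom B E z W \<Longrightarrow> U \<subseteq> W \<Longrightarrow> nb E U \<subseteq> W"
  by (auto simp: nb_def closed_dom_def)

lemma nb_finite: "closed_dom B E z W \<Longrightarrow> U \<subseteq> W \<Longrightarrow> finite U \<Longrightarrow> finite (nb E U)"
  unfolding nb_def closed_dom_def by (auto)

lemma nbrs_in_nb: "i \<in> S \<Longrightarrow> insert i (nbrs E i) \<subseteq> nb E S"
  by (auto simp: nb_def)

lemma inflow_cong:
  assumes "\<And>j. j \<in> insert i (nbrs E i) \<Longrightarrow> a j = b j"
  shows "inflow r E a i = inflow r E b i"
  unfolding inflow_def using assms by (auto intro!: sum.cong)

lemma act_prob_cong:
  assumes "\<And>j. j \<in> T \<Longrightarrow> x j = x' j" "\<And>j. j \<in> T \<Longrightarrow> a j = a' j"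
  shows "act_prob \<pi> t x a T = act_prob \<pi> t x' a' T"
  unfolding act_prob_def using assms by (auto intro!: prod.cong)

lemma act_prob_split:
  assumes "S \<subseteq> T" "finite T"
  shows "act_prob \<pi> t x a T = (\<Prod>j\<in>T - S. (if a j = 1 then \<pi> t (x j) else 1 - \<pi> t (x j))) * act_prob \<pi> t x (restrict a S) S"
proof -
  have "act_prob \<pi> t x (restrict a S) S = act_prob \<pi> t x a S"
    by (rule act_prob_cong) auto
  then show ?thesis unfolding act_prob_def using prod.subset_diff[OF assms] by simp
qed

lemma act_marg:
  assumes "S \<subseteq> T" "finite T"
  shows "(\<Sum>a\<in>acts T. act_prob \<pi> t x a T * h (restrict a S)) = (\<Sum>b\<in>acts S. act_prob \<pi> t x b S * h b)"
proof -
  have "(\<Sum>a\<in>acts T. act_prob \<pi> t x a T * h (restrict a S)) =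
     (\<Sum>a\<in>acts T. (\<Prod>j\<in>T - S. (if a j = 1 then \<pi> t (x j) else 1 - \<pi> t (x j))) * (act_prob \<pi> t x (restrict a S) S * h (restrict a S)))"
    by (simp add: act_prob_split[OF assms] mult.assoc)
  also have "\<dots> = (\<Sum>b\<in>acts S. act_prob \<pi> t x b S * h b)"
    unfolding acts_def
    by (rule sum_PiE_marg[where p = "\<lambda>j v. (if v = 1 then \<pi> t (x j) else 1 - \<pi> t (x j))"]) (use assms in auto)
  finally show ?thesis .
qed

lemma act_sum1:
  assumes "finite T"
  shows "(\<Sum>a\<in>acts T. act_prob \<pi> t x a T) = 1"
  using act_marg[OF empty_subsetI assms, of \<pi> t x "\<lambda>_. 1"] by (simp add: act_prob_def acts_def)

lemma trans_marg:
  assumes "finite U" "S \<subseteq> U" "\<And>j. j \<in> U \<Longrightarrow> x j \<le> B"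
  shows "(\<Sum>x'\<in>cfgs B U. (\<Prod>i\<in>U. trans_prob \<alpha> B (m i) dt (x i) (x' i)) * F (restrict x' S))
     = (\<Sum>y\<in>cfgs B S. (\<Prod>i\<in>S. trans_prob \<alpha> B (m i) dt (x i) (y i)) * F y)"
proof -
  have "(\<Sum>x'\<in>cfgs B U. (\<Prod>i\<in>U. trans_prob \<alpha> B (m i) dt (x i) (x' i)) * F (restrict x' S))
     = (\<Sum>x'\<in>cfgs B U. (\<Prod>i\<in>U - S. trans_prob \<alpha> B (m i) dt (x i) (x' i)) *
          ((\<Prod>i\<in>S. trans_prob \<alpha> B (m i) dt (x i) (restrict x' S i)) * F (restrict x' S)))"
    by (intro sum.cong refl) (subst prod.subset_diff[OF assms(2,1)], simp add: mult.assoc)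
  also have "\<dots> = (\<Sum>y\<in>cfgs B S. (\<Prod>i\<in>S. trans_prob \<alpha> B (m i) dt (x i) (y i)) * F y)"
    unfolding cfgs_def
    by (rule sum_PiE_marg[where p = "\<lambda>j v. trans_prob \<alpha> B (m j) dt (x j) v"]) (use assms trans_prob_row in auto)
  finally show ?thesis .
qed

lemma finite_cfgs: "finite U \<Longrightarrow> finite (cfgs B U)"
  by (auto simp: cfgs_def intro!: finite_PiE)

lemma finite_acts: "finite U \<Longrightarrow> finite (acts U)"
  by (auto simp: acts_def intro!: finite_PiE)

lemma restrict_cfgs: "x \<in> cfgs B U \<Longrightarrow> S \<subseteq> U \<Longrightarrow> restrict x S \<in> cfgs B S"
  by (auto simp: cfgs_def)

lemma cfgs_le: "x \<in> cfgs B U \<Longrightarrow> j \<in> U \<Longrightarrow> x j \<le> B"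
  by (auto simp: cfgs_def)

lemma law_marg:
  assumes cd: "closed_dom B E z W" and U: "finite U" "S \<subseteq> U" "U \<subseteq> W"
  shows "(\<Sum>x\<in>cfgs B U. law B \<alpha> dt rate lamP lam0 E z \<pi> t U l x * F (restrict x S))
       = (\<Sum>y\<in>cfgs B S. law B \<alpha> dt rate lamP lam0 E z \<pi> t S l y * F y)"
  using U
proof (induction t arbitrary: U S l F)
  case 0
  have zU: "restrict z U \<in> cfgs B U" using 0 cd by (auto simp: cfgs_def closed_dom_def)
  have zS: "restrict z S \<in> cfgs B S" using 0 cd by (auto simp: cfgs_def closed_dom_def)
  have rr: "restrict (restrict z U) S = restrict z S" using 0 by (auto simp: restrict_def fun_eq_iff)
  have "(\<Sum>x\<in>cfgs B U. law B \<alpha> dt rate lamP lam0 E z \<pi> 0 U l x * F (restrict x S))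
      = (\<Sum>x\<in>cfgs B U. if x = restrict z U then lam0 l * F (restrict (restrict z U) S) else 0)"
    by (intro sum.cong refl) auto
  also have "\<dots> = (if restrict z U \<in> cfgs B U then lam0 l * F (restrict (restrict z U) S) else 0)"
    using finite_cfgs[OF 0(1)] by (rule sum.delta)
  also have "\<dots> = lam0 l * F (restrict z S)" by (simp only: zU rr if_True)
  also have "\<dots> = (\<Sum>y\<in>cfgs B S. if y = restrict z S then lam0 l * F (restrict z S) else 0)"
    using zS finite_subset[OF 0(2,1)] by (simp only: sum.delta[OF finite_cfgs] if_True)
  also have "\<dots> = (\<Sum>y\<in>cfgs B S. law B \<alpha> dt rate lamP lam0 E z \<pi> 0 S l y * F y)"
    by (intro sum.cong refl) auto
  finally show ?case .
next
  case (Suc t)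
  let ?L = "law B \<alpha> dt rate lamP lam0 E z \<pi>"
  define TU where "TU = nb E U"
  define TS where "TS = nb E S"
  have TSU: "TS \<subseteq> TU" unfolding TS_def TU_def by (rule nb_mono) (use Suc in auto)
  have TUW: "TU \<subseteq> W" unfolding TU_def by (rule nb_closed[OF cd]) (use Suc in auto)
  have TUf: "finite TU" unfolding TU_def by (rule nb_finite[OF cd]) (use Suc in auto)
  have UTU: "U \<subseteq> TU" unfolding TU_def by (rule nb_sub)
  define tp where "tp = (\<lambda>l0 a x i (v::nat). trans_prob \<alpha> B (inflow (rate l0) E a i) dt (x i) v)"
  define Psi where "Psi = (\<lambda>l0 x a. \<Sum>y\<in>cfgs B S. (\<Prod>i\<in>S. tp l0 a x i (y i)) * F y)"
  define Phi where "Phi = (\<lambda>l0 x. \<Sum>b\<in>acts TS. act_prob \<pi> t x b TS * Psi l0 x b)"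
  have step1: "(\<Sum>x'\<in>cfgs B U. (\<Prod>i\<in>U. tp l0 a x i (x' i)) * F (restrict x' S)) = Psi l0 x a"
    if "x \<in> cfgs B TU" for l0 a x
    unfolding Psi_def tp_def
    by (rule trans_marg) (use Suc.prems that UTU cfgs_le in auto)
  have Psi_cong: "Psi l0 x a = Psi l0 x (restrict a TS)" for l0 x a
  proof -
    have "inflow (rate l0) E a i = inflow (rate l0) E (restrict a TS) i" if "i \<in> S" for i
      by (rule inflow_cong) (use nbrs_in_nb[OF that, of E] in \<open>auto simp: TS_def\<close>)
    then show ?thesis unfolding Psi_def tp_def by (auto intro!: sum.cong prod.cong)
  qed
  have step2: "(\<Sum>a\<in>acts TU. act_prob \<pi> t x a TU * Psi l0 x a) = Phi l0 x" for l0 x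
    unfolding Phi_def by (subst Psi_cong) (rule act_marg[OF TSU TUf])
  have Phi_cong: "Phi l0 x = Phi l0 (restrict x TS)" for l0 x
  proof -
    have "act_prob \<pi> t x b TS = act_prob \<pi> t (restrict x TS) b TS" for b
      by (rule act_prob_cong) auto
    moreover have "Psi l0 x b = Psi l0 (restrict x TS) b" for b
      unfolding Psi_def tp_def using nb_sub[of S E] by (auto simp: TS_def subset_iff intro!: sum.cong prod.cong)
    ultimately show ?thesis unfolding Phi_def by simp
  qed
  have "(\<Sum>x'\<in>cfgs B U. ?L (Suc t) U l x' * F (restrict x' S))
     = (\<Sum>x'\<in>cfgs B U. \<Sum>l0\<in>UNIV. \<Sum>x\<in>cfgs B TU. ?L t TU l0 x * lamP l0 l *
         (\<Sum>a\<in>acts TU. act_prob \<pi> t x a TU * ((\<Prod>i\<in>U. tp l0 a x i (x' i)) * F (restrict x' S))))"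
    by (intro sum.cong refl) (simp add: law_Suc TU_def tp_def sum_distrib_left sum_distrib_right mult.assoc)
  also have "\<dots> = (\<Sum>l0\<in>UNIV. \<Sum>x\<in>cfgs B TU. ?L t TU l0 x * lamP l0 l *
         (\<Sum>a\<in>acts TU. act_prob \<pi> t x a TU *
            (\<Sum>x'\<in>cfgs B U. (\<Prod>i\<in>U. tp l0 a x i (x' i)) * F (restrict x' S))))"
    by (simp add: sum_distrib_left sum.swap[of _ "cfgs B U"])
  also have "\<dots> = (\<Sum>l0\<in>UNIV. \<Sum>x\<in>cfgs B TU. ?L t TU l0 x * (lamP l0 l * Phi l0 (restrict x TS)))"
    by (intro sum.cong refl) (simp add: step1 step2 Phi_cong[symmetric])
  also have "\<dots> = (\<Sum>l0\<in>UNIV. \<Sum>y\<in>cfgs B TS. ?L t TS l0 y * (lamP l0 l * Phi l0 y))"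
    by (intro sum.cong refl Suc.IH) (use TSU TUW TUf in auto)
  also have "\<dots> = (\<Sum>l0\<in>UNIV. \<Sum>x\<in>cfgs B TS. ?L t TS l0 x * lamP l0 l *
         (\<Sum>b\<in>acts TS. act_prob \<pi> t x b TS * Psi l0 x b))"
    by (simp add: Phi_def mult.assoc)
  also have "\<dots> = (\<Sum>y\<in>cfgs B S. \<Sum>l0\<in>UNIV. \<Sum>x\<in>cfgs B TS. ?L t TS l0 x * lamP l0 l *
         (\<Sum>b\<in>acts TS. act_prob \<pi> t x b TS * ((\<Prod>i\<in>S. tp l0 b x i (y i)) * F y)))"
    by (simp add: Psi_def sum_distrib_left sum.swap[of _ "cfgs B S"])
  also have "\<dots> = (\<Sum>y\<in>cfgs B S. ?L (Suc t) S l y * F y)"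
    by (intro sum.cong refl) (simp add: law_Suc TS_def tp_def sum_distrib_left sum_distrib_right mult.assoc)
  finally show ?case .
qed

lemma cfgs_empty: "cfgs B {} = {\<lambda>_. undefined}" by (simp add: cfgs_def)
lemma acts_empty: "acts {} = {\<lambda>_. undefined}" by (simp add: acts_def)
lemma nb_empty: "nb E {} = {}" by (simp add: nb_def)

lemma law_empty_sum:
  assumes "\<forall>l. (\<Sum>l'\<in>UNIV. lamP l l') = 1" "(\<Sum>l\<in>UNIV. lam0 l) = 1"
  shows "(\<Sum>l\<in>UNIV. law B \<alpha> dt rate lamP lam0 E z \<pi> t {} l (\<lambda>_. undefined)) = 1"
proof (induction t)
  case 0
  have r: "(\<lambda>_. undefined) = restrict z {}" by (rule ext) simp
  have "(\<Sum>l\<in>UNIV. law B \<alpha> dt rate lamP lam0 E z \<pi> 0 {} l (\<lambda>_. undefined)) = (\<Sum>l\<in>UNIV. lam0 l)"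
    by (intro sum.cong refl) (subst law.simps(1), subst if_P[OF r], simp)
  then show ?case using assms(2) by simp
next
  case (Suc t)
  have "(\<Sum>l'\<in>UNIV. law B \<alpha> dt rate lamP lam0 E z \<pi> (Suc t) {} l' (\<lambda>_. undefined))
     = (\<Sum>l'\<in>UNIV. \<Sum>l\<in>UNIV. law B \<alpha> dt rate lamP lam0 E z \<pi> t {} l (\<lambda>_. undefined) * lamP l l')"
    by (simp add: law_Suc nb_empty cfgs_empty acts_empty act_prob_def)
  also have "\<dots> = (\<Sum>l\<in>UNIV. law B \<alpha> dt rate lamP lam0 E z \<pi> t {} l (\<lambda>_. undefined) * (\<Sum>l'\<in>UNIV. lamP l l'))"
    unfolding sum_distrib_left by (rule sum.swap)
  also have "\<dots> = 1" using assms Suc by simp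
  finally show ?case .
qed

lemma law_sum1:
  assumes "\<forall>l. (\<Sum>l'\<in>UNIV. lamP l l') = 1" "(\<Sum>l\<in>UNIV. lam0 l) = 1"
    and cd: "closed_dom B E z W" and U: "finite U" "U \<subseteq> W"
  shows "(\<Sum>l\<in>UNIV. \<Sum>x\<in>cfgs B U. law B \<alpha> dt rate lamP lam0 E z \<pi> t U l x) = 1"
proof -
  have "(\<Sum>x\<in>cfgs B U. law B \<alpha> dt rate lamP lam0 E z \<pi> t U l x) = law B \<alpha> dt rate lamP lam0 E z \<pi> t {} l (\<lambda>_. undefined)" for l
    using law_marg[OF cd U(1) empty_subsetI U(2), of \<alpha> dt rate lamP lam0 \<pi> t l "\<lambda>_. 1"]
    by (simp add: cfgs_empty)
  then show ?thesis using law_empty_sum[OF assms(1,2)] by simp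
qed

lemma inflow_nonneg:
  assumes "r \<ge> 0" "a i \<le> 1"
  shows "inflow r E a i \<ge> 0"
  unfolding inflow_def using assms by (auto intro!: mult_nonneg_nonneg add_nonneg_nonneg sum_nonneg)

lemma inflow_le:
  assumes "r \<ge> 0" "\<And>j. j \<in> insert i (nbrs E i) \<Longrightarrow> a j \<le> 1" "finite (nbrs E i)"
  shows "inflow r E a i \<le> r * (1 + real (deg E i))"
proof -
  have "real (a j) / real (deg E j) \<le> 1" if "j \<in> nbrs E i" for j
  proof (cases "deg E j = 0")
    case True then show ?thesis by simp
  next
    case False
    then have "real (a j) \<le> real (deg E j)" using assms(2)[of j] that by simp
    then show ?thesis using False by simp
  qed
  then have "(\<Sum>j\<in>nbrs E i. real (a j) / real (deg E j)) \<le> (\<Sum>j\<in>nbrs E i. 1)"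
    by (intro sum_mono) auto
  also have "\<dots> = real (deg E i)" by (simp add: deg_def)
  finally have s: "(\<Sum>j\<in>nbrs E i. real (a j) / real (deg E j)) \<le> real (deg E i)" .
  have "(1 - real (a i)) \<le> 1" by simp
  then show ?thesis unfolding inflow_def using s assms(1) by (intro mult_left_mono) auto
qed

lemma act_prob_nonneg:
  assumes "\<And>j. j \<in> T \<Longrightarrow> 0 \<le> \<pi> t (x j) \<and> \<pi> t (x j) \<le> 1"
  shows "act_prob \<pi> t x a T \<ge> 0"
  unfolding act_prob_def using assms by (auto intro!: prod_nonneg)

lemma acts_le1: "a \<in> acts T \<Longrightarrow> j \<in> T \<Longrightarrow> a j \<le> 1"
  using PiE_mem[of a T "\<lambda>_. {0,1}" j] by (auto simp: acts_def)

lemma law_nonneg: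
  assumes pol: "\<forall>t s. s \<le> B \<longrightarrow> 0 \<le> \<pi> t s \<and> \<pi> t s \<le> 1"
    and lamP: "\<forall>l l'. lamP l l' \<ge> 0" and lam0: "\<forall>l. lam0 l \<ge> 0"
    and rate: "\<forall>l. rate l \<ge> 0" and "\<alpha> \<ge> 0" "dt \<ge> 0"
  shows "law B \<alpha> dt rate lamP lam0 E z \<pi> t S l x \<ge> 0"
proof (induction t arbitrary: S l x)
  case 0 then show ?case using lam0 by simp
next
  case (Suc t)
  show ?case unfolding law_Suc
  proof (clarsimp, intro sum_nonneg mult_nonneg_nonneg Suc.IH prod_nonneg)
    fix l0 x0 a i assume x: "x \<in> cfgs B S" and x0: "x0 \<in> cfgs B (nb E S)" and a: "a \<in> acts (nb E S)" and i: "i \<in> S"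
    have "a i \<le> 1" using acts_le1[OF a] nb_sub[of S E] i by blast
    then show "0 \<le> trans_prob \<alpha> B (inflow (rate l0) E a i) dt (x0 i) (x i)"
      using cfgs_le[OF x i] rate assms(5,6)
      by (intro trans_prob_nonneg inflow_nonneg) auto
  next
    fix l0 x0 a assume x0: "x0 \<in> cfgs B (nb E S)"
    show "0 \<le> act_prob \<pi> t x0 a (nb E S)"
      using cfgs_le[OF x0] pol by (intro act_prob_nonneg) auto
  qed (use lamP in auto)
qed

lemma drop_marg:
  assumes cd: "closed_dom B E z W" and U: "finite U" "U \<subseteq> W" and S: "insert i (nbrs E i) \<subseteq> S" "S \<subseteq> U"
  shows "drop_at B \<alpha> dt rate lamP lam0 E z \<pi> t U i = drop_at B \<alpha> dt rate lamP lam0 E z \<pi> t S i"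
proof -
  let ?L = "law B \<alpha> dt rate lamP lam0 E z \<pi>"
  define G where "G = (\<lambda>l y. \<Sum>b\<in>acts S. act_prob \<pi> t y b S * exp_drops \<alpha> B dt (inflow (rate l) E b i) (y i))"
  have iS: "i \<in> S" using S by auto
  have inner: "(\<Sum>a\<in>acts U. act_prob \<pi> t x a U * exp_drops \<alpha> B dt (inflow (rate l) E a i) (x i)) = G l (restrict x S)" for l x
  proof -
    have "(\<Sum>a\<in>acts U. act_prob \<pi> t x a U * exp_drops \<alpha> B dt (inflow (rate l) E a i) (x i))
        = (\<Sum>a\<in>acts U. act_prob \<pi> t x a U * exp_drops \<alpha> B dt (inflow (rate l) E (restrict a S) i) (x i))"
      using S by (intro sum.cong refl arg_cong2[where f="(*)"] arg_cong2[where f="exp_drops \<alpha> B dt"] inflow_cong) auto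
    also have "\<dots> = (\<Sum>b\<in>acts S. act_prob \<pi> t x b S * exp_drops \<alpha> B dt (inflow (rate l) E b i) (x i))"
      by (rule act_marg) (use U S in auto)
    also have "\<dots> = G l (restrict x S)" unfolding G_def using iS
      by (intro sum.cong refl arg_cong2[where f="(*)"] act_prob_cong) auto
    finally show ?thesis .
  qed
  have "drop_at B \<alpha> dt rate lamP lam0 E z \<pi> t U i = (\<Sum>l\<in>UNIV. \<Sum>x\<in>cfgs B U. ?L t U l x * G l (restrict x S))"
    unfolding drop_at_def by (simp add: inner)
  also have "\<dots> = (\<Sum>l\<in>UNIV. \<Sum>y\<in>cfgs B S. ?L t S l y * G l y)"
    by (intro sum.cong refl law_marg[OF cd]) (use U S in auto)
  also have "\<dots> = drop_at B \<alpha> dt rate lamP lam0 E z \<pi> t S i"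
    unfolding drop_at_def G_def by simp
  finally show ?thesis .
qed

lemma drop_bounds:
  assumes pol: "\<forall>t s. s \<le> B \<longrightarrow> 0 \<le> \<pi> t s \<and> \<pi> t s \<le> 1"
    and lamP: "\<forall>l l'. lamP l l' \<ge> 0" "\<forall>l. (\<Sum>l'\<in>UNIV. lamP l l') = 1"
    and lam0: "\<forall>l. lam0 l \<ge> 0" "(\<Sum>l\<in>UNIV. lam0 l) = 1"
    and rate: "\<forall>l. rate l \<ge> 0" "\<forall>l. rate l \<le> R" and al: "\<alpha> \<ge> 0" and dt: "dt \<ge> 0"
    and cd: "closed_dom B E z W" and S: "finite S" "S \<subseteq> W" "insert i (nbrs E i) \<subseteq> S"
  shows "0 \<le> drop_at B \<alpha> dt rate lamP lam0 E z \<pi> t S i \<and>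
         drop_at B \<alpha> dt rate lamP lam0 E z \<pi> t S i \<le> R * (1 + real (deg E i)) * dt"
proof -
  let ?L = "law B \<alpha> dt rate lamP lam0 E z \<pi>"
  let ?c = "R * (1 + real (deg E i)) * dt"
  have iW: "i \<in> W" using S by auto
  have fn: "finite (nbrs E i)" using cd iW by (auto simp: closed_dom_def)
  have ED: "0 \<le> exp_drops \<alpha> B dt (inflow (rate l) E a i) (x i) \<and> exp_drops \<alpha> B dt (inflow (rate l) E a i) (x i) \<le> ?c"
    if x: "x \<in> cfgs B S" and a: "a \<in> acts S" for l x a
  proof -
    have a1: "a j \<le> 1" if "j \<in> insert i (nbrs E i)" for j using acts_le1[OF a] S that by auto
    have m0: "inflow (rate l) E a i \<ge> 0" using inflow_nonneg[of "rate l" a i E] rate a1 by auto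
    have m1: "inflow (rate l) E a i \<le> rate l * (1 + real (deg E i))" using inflow_le[of "rate l" i E a] rate a1 fn by auto
    have xi: "x i \<le> B" using cfgs_le[OF x] S by auto
    have "exp_drops \<alpha> B dt (inflow (rate l) E a i) (x i) \<le> inflow (rate l) E a i * dt"
      using exp_drops_bounds(2)[OF m0 al dt xi] .
    also have "\<dots> \<le> ?c" using m1 rate dt
      by (intro mult_right_mono) (auto intro: order_trans[OF m1] mult_right_mono)
    finally show ?thesis using exp_drops_bounds(1)[OF m0 al dt xi] by simp
  qed
  have LN: "?L t S l x \<ge> 0" for l x
    using law_nonneg[OF pol lamP(1) lam0(1) rate(1) al dt] .
  have inner: "0 \<le> (\<Sum>a\<in>acts S. act_prob \<pi> t x a S * exp_drops \<alpha> B dt (inflow (rate l) E a i) (x i)) \<and>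
     (\<Sum>a\<in>acts S. act_prob \<pi> t x a S * exp_drops \<alpha> B dt (inflow (rate l) E a i) (x i)) \<le> ?c"
    if x: "x \<in> cfgs B S" for l x
  proof -
    have AP: "act_prob \<pi> t x a S \<ge> 0" for a using cfgs_le[OF x] pol by (intro act_prob_nonneg) auto
    have "(\<Sum>a\<in>acts S. act_prob \<pi> t x a S * exp_drops \<alpha> B dt (inflow (rate l) E a i) (x i))
        \<le> (\<Sum>a\<in>acts S. act_prob \<pi> t x a S * ?c)"
      using ED[OF x] AP by (intro sum_mono mult_left_mono) auto
    also have "\<dots> = ?c" using act_sum1[OF S(1)] by (simp add: sum_distrib_right[symmetric])
    finally show ?thesis using ED[OF x] AP by (auto intro!: sum_nonneg)
  qed
  have "drop_at B \<alpha> dt rate lamP lam0 E z \<pi> t S i \<le> (\<Sum>l\<in>UNIV. \<Sum>x\<in>cfgs B S. ?L t S l x * ?c)"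
    unfolding drop_at_def using inner LN by (intro sum_mono mult_left_mono) auto
  also have "\<dots> = ?c" using law_sum1[OF lamP(2) lam0(2) cd S(1,2)]
    by (simp add: sum_distrib_right[symmetric])
  finally show ?thesis unfolding drop_at_def using inner LN by (auto intro!: sum_nonneg)
qed

primrec good :: "(nat \<Rightarrow> nat \<Rightarrow> bool) \<Rightarrow> (nat \<Rightarrow> nat \<Rightarrow> bool) \<Rightarrow> (nat \<Rightarrow> nat) \<Rightarrow> nat set \<Rightarrow> nat \<Rightarrow> nat set \<Rightarrow> bool" where
  "good E E' \<phi> D 0 S = (S \<subseteq> D)"
| "good E E' \<phi> D (Suc t) S = (S \<subseteq> D \<and> (\<forall>u\<in>S. \<phi> ` nbrs E u = nbrs E' (\<phi> u) \<and> (\<forall>w\<in>nbrs E u. deg E w = deg E' (\<phi> w)))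
      \<and> good E E' \<phi> D t (nb E S))"

lemma good_sub: "good E E' \<phi> D t S \<Longrightarrow> S \<subseteq> D"
  by (cases t) auto

definition tr :: "nat set \<Rightarrow> (nat \<Rightarrow> nat) \<Rightarrow> nat set \<Rightarrow> (nat \<Rightarrow> nat) \<Rightarrow> (nat \<Rightarrow> nat)" where
  "tr D \<phi> S x = restrict (\<lambda>v. x (inv_into D \<phi> v)) (\<phi> ` S)"

lemma tr_apply: "inj_on \<phi> D \<Longrightarrow> S \<subseteq> D \<Longrightarrow> u \<in> S \<Longrightarrow> tr D \<phi> S x (\<phi> u) = x u"
  unfolding tr_def by (auto simp: inv_into_f_f subset_iff)

lemma tr_bij:
  assumes "inj_on \<phi> D" "S \<subseteq> D"
  shows "bij_betw (tr D \<phi> S) (PiE S (\<lambda>_. A)) (PiE (\<phi> ` S) (\<lambda>_. A))"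
proof (rule bij_betw_byWitness[where f' = "\<lambda>y. restrict (\<lambda>u. y (\<phi> u)) S"])
  show "\<forall>x\<in>PiE S (\<lambda>_. A). restrict (\<lambda>u. tr D \<phi> S x (\<phi> u)) S = x"
    using assms by (auto simp: tr_apply PiE_def extensional_def fun_eq_iff)
  show "\<forall>y\<in>PiE (\<phi> ` S) (\<lambda>_. A). tr D \<phi> S (restrict (\<lambda>u. y (\<phi> u)) S) = y"
    using assms by (auto simp: tr_def PiE_def extensional_def fun_eq_iff inv_into_f_f subset_iff f_inv_into_f)
  show "tr D \<phi> S ` PiE S (\<lambda>_. A) \<subseteq> PiE (\<phi> ` S) (\<lambda>_. A)"
    using assms by (auto simp: tr_def PiE_def extensional_def Pi_def inv_into_f_f subset_iff)
  show "(\<lambda>y. restrict (\<lambda>u. y (\<phi> u)) S) ` PiE (\<phi> ` S) (\<lambda>_. A) \<subseteq> PiE S (\<lambda>_. A)"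
    by (auto simp: PiE_def Pi_def)
qed

lemma tr_cfgs: "inj_on \<phi> D \<Longrightarrow> S \<subseteq> D \<Longrightarrow> bij_betw (tr D \<phi> S) (cfgs B S) (cfgs B (\<phi> ` S))"
  unfolding cfgs_def by (rule tr_bij)

lemma tr_acts: "inj_on \<phi> D \<Longrightarrow> S \<subseteq> D \<Longrightarrow> bij_betw (tr D \<phi> S) (acts S) (acts (\<phi> ` S))"
  unfolding acts_def by (rule tr_bij)

lemma tr_inj_ext:
  assumes "inj_on \<phi> D" "S \<subseteq> D" "x \<in> extensional S" "y \<in> extensional S" "tr D \<phi> S x = tr D \<phi> S y"
  shows "x = y"
proof
  fix u show "x u = y u"
  proof (cases "u \<in> S")
    case True then show ?thesis using assms tr_apply[of \<phi> D S u] by metis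
  next
    case False then show ?thesis using assms by (auto simp: extensional_def)
  qed
qed

lemma nb_transport:
  assumes "\<forall>u\<in>S. \<phi> ` nbrs E u = nbrs E' (\<phi> u)"
  shows "\<phi> ` nb E S = nb E' (\<phi> ` S)"
proof -
  have "nb E' (\<phi> ` S) = \<phi> ` S \<union> (\<Union>u\<in>S. nbrs E' (\<phi> u))" by (auto simp: nb_def)
  also have "\<dots> = \<phi> ` S \<union> (\<Union>u\<in>S. \<phi> ` nbrs E u)" using assms by auto
  also have "\<dots> = \<phi> ` nb E S" by (auto simp: nb_def)
  finally show ?thesis by simp
qed

lemma act_prob_transport:
  assumes "inj_on \<phi> D" "T \<subseteq> D"
  shows "act_prob \<pi> t (tr D \<phi> T x) (tr D \<phi> T a) (\<phi> ` T) = act_prob \<pi> t x a T"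
proof -
  have "inj_on \<phi> T" using assms inj_on_subset by blast
  then show ?thesis unfolding act_prob_def
    by (simp add: prod.reindex) (intro prod.cong refl, use assms in \<open>auto simp: tr_apply\<close>)
qed

lemma inflow_transport:
  assumes inj: "inj_on \<phi> D" and T: "T \<subseteq> D" "insert i (nbrs E i) \<subseteq> T"
    and nb: "\<phi> ` nbrs E i = nbrs E' (\<phi> i)" and dg: "\<forall>w\<in>nbrs E i. deg E w = deg E' (\<phi> w)"
  shows "inflow r E' (tr D \<phi> T a) (\<phi> i) = inflow r E a i"
proof -
  have injn: "inj_on \<phi> (nbrs E i)" using inj T inj_on_subset by blast
  have "(\<Sum>j\<in>nbrs E' (\<phi> i). real (tr D \<phi> T a j) / real (deg E' j))
      = (\<Sum>j\<in>nbrs E i. real (tr D \<phi> T a (\<phi> j)) / real (deg E' (\<phi> j)))"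
    unfolding nb[symmetric] by (rule sum.reindex[OF injn, unfolded comp_def])
  also have "\<dots> = (\<Sum>j\<in>nbrs E i. real (a j) / real (deg E j))"
    using T dg by (intro sum.cong refl) (auto simp: tr_apply[OF inj T(1)])
  finally show ?thesis unfolding inflow_def using T by (simp add: tr_apply[OF inj T(1)])
qed

lemma law_transport:
  assumes inj: "inj_on \<phi> D" and mk: "\<forall>u\<in>D. z' (\<phi> u) = z u"
  shows "good E E' \<phi> D t S \<Longrightarrow> x \<in> cfgs B S \<Longrightarrow>
    law B \<alpha> dt rate lamP lam0 E z \<pi> t S l x = law B \<alpha> dt rate lamP lam0 E' z' \<pi> t (\<phi> ` S) l (tr D \<phi> S x)"
proof (induction t arbitrary: S l x)
  case 0
  have SD: "S \<subseteq> D" using 0 by simp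
  have e1: "tr D \<phi> S (restrict z S) = restrict z' (\<phi> ` S)"
    using SD mk inj by (auto simp: tr_def fun_eq_iff inv_into_f_f subset_iff)
  have "x = restrict z S \<longleftrightarrow> tr D \<phi> S x = tr D \<phi> S (restrict z S)"
    using tr_inj_ext[OF inj SD, of x "restrict z S"] 0(2) by (auto simp: cfgs_def PiE_def)
  then show ?case using e1 by simp
next
  case (Suc t)
  let ?L = "law B \<alpha> dt rate lamP lam0 E z \<pi>"
  let ?L' = "law B \<alpha> dt rate lamP lam0 E' z' \<pi>"
  define T where "T = nb E S"
  have SD: "S \<subseteq> D" and nbS: "\<forall>u\<in>S. \<phi> ` nbrs E u = nbrs E' (\<phi> u)"
    and dgS: "\<forall>u\<in>S. \<forall>w\<in>nbrs E u. deg E w = deg E' (\<phi> w)" and gT: "good E E' \<phi> D t T"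
    using Suc.prems by (auto simp: T_def)
  have TD: "T \<subseteq> D" using good_sub[OF gT] .
  have phiT: "\<phi> ` T = nb E' (\<phi> ` S)" unfolding T_def by (rule nb_transport[OF nbS])
  have x'c: "tr D \<phi> S x \<in> cfgs B (\<phi> ` S)" using tr_cfgs[OF inj SD] Suc.prems(2) by (auto simp: bij_betw_def)
  have ST: "insert i (nbrs E i) \<subseteq> T" if "i \<in> S" for i unfolding T_def by (rule nbrs_in_nb[OF that])
  have prodeq: "(\<Prod>i'\<in>\<phi> ` S. trans_prob \<alpha> B (inflow (rate l0) E' (tr D \<phi> T a) i') dt (tr D \<phi> T y i') (tr D \<phi> S x i'))
      = (\<Prod>i\<in>S. trans_prob \<alpha> B (inflow (rate l0) E a i) dt (y i) (x i))" for l0 a y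
  proof -
    have "inj_on \<phi> S" using inj SD inj_on_subset by blast
    then have "(\<Prod>i'\<in>\<phi> ` S. trans_prob \<alpha> B (inflow (rate l0) E' (tr D \<phi> T a) i') dt (tr D \<phi> T y i') (tr D \<phi> S x i'))
       = (\<Prod>i\<in>S. trans_prob \<alpha> B (inflow (rate l0) E' (tr D \<phi> T a) (\<phi> i)) dt (tr D \<phi> T y (\<phi> i)) (tr D \<phi> S x (\<phi> i)))"
      by (simp add: prod.reindex)
    also have "\<dots> = (\<Prod>i\<in>S. trans_prob \<alpha> B (inflow (rate l0) E a i) dt (y i) (x i))"
    proof (intro prod.cong refl)
      fix i assume i: "i \<in> S"
      have "inflow (rate l0) E' (tr D \<phi> T a) (\<phi> i) = inflow (rate l0) E a i"
        using inflow_transport[OF inj TD ST[OF i]] nbS dgS i by auto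
      moreover have "tr D \<phi> T y (\<phi> i) = y i" using tr_apply[OF inj TD] ST[OF i] by auto
      moreover have "tr D \<phi> S x (\<phi> i) = x i" using tr_apply[OF inj SD i] .
      ultimately show "trans_prob \<alpha> B (inflow (rate l0) E' (tr D \<phi> T a) (\<phi> i)) dt (tr D \<phi> T y (\<phi> i)) (tr D \<phi> S x (\<phi> i))
          = trans_prob \<alpha> B (inflow (rate l0) E a i) dt (y i) (x i)" by simp
    qed
    finally show ?thesis .
  qed
  have inner: "(\<Sum>b\<in>acts (\<phi> ` T). act_prob \<pi> t (tr D \<phi> T y) b (\<phi> ` T) *
        (\<Prod>i'\<in>\<phi> ` S. trans_prob \<alpha> B (inflow (rate l0) E' b i') dt (tr D \<phi> T y i') (tr D \<phi> S x i')))
     = (\<Sum>a\<in>acts T. act_prob \<pi> t y a T * (\<Prod>i\<in>S. trans_prob \<alpha> B (inflow (rate l0) E a i) dt (y i) (x i)))" for l0 y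
    by (subst sum.reindex_bij_betw[OF tr_acts[OF inj TD], symmetric]) (simp add: act_prob_transport[OF inj TD] prodeq)
  have "?L' (Suc t) (\<phi> ` S) l (tr D \<phi> S x) = (\<Sum>l0\<in>UNIV. \<Sum>y\<in>cfgs B (\<phi> ` T). ?L' t (\<phi> ` T) l0 y * lamP l0 l *
         (\<Sum>b\<in>acts (\<phi> ` T). act_prob \<pi> t y b (\<phi> ` T) *
            (\<Prod>i'\<in>\<phi> ` S. trans_prob \<alpha> B (inflow (rate l0) E' b i') dt (y i') (tr D \<phi> S x i'))))"
    unfolding law_Suc phiT using x'c by simp
  also have "\<dots> = (\<Sum>l0\<in>UNIV. \<Sum>y\<in>cfgs B T. ?L' t (\<phi> ` T) l0 (tr D \<phi> T y) * lamP l0 l *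
         (\<Sum>b\<in>acts (\<phi> ` T). act_prob \<pi> t (tr D \<phi> T y) b (\<phi> ` T) *
            (\<Prod>i'\<in>\<phi> ` S. trans_prob \<alpha> B (inflow (rate l0) E' b i') dt (tr D \<phi> T y i') (tr D \<phi> S x i'))))"
    by (rule sum.cong[OF refl], rule sum.reindex_bij_betw[OF tr_cfgs[OF inj TD], symmetric])
  also have "\<dots> = (\<Sum>l0\<in>UNIV. \<Sum>y\<in>cfgs B T. ?L t T l0 y * lamP l0 l *
         (\<Sum>a\<in>acts T. act_prob \<pi> t y a T * (\<Prod>i\<in>S. trans_prob \<alpha> B (inflow (rate l0) E a i) dt (y i) (x i))))"
    by (intro sum.cong refl) (simp add: inner Suc.IH[OF gT])
  also have "\<dots> = ?L (Suc t) S l x"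
    unfolding law_Suc T_def using Suc.prems(2) by simp
  finally show ?case by simp
qed

lemma drop_transport:
  assumes inj: "inj_on \<phi> D" and mk: "\<forall>u\<in>D. z' (\<phi> u) = z u"
    and g: "good E E' \<phi> D t S" and iS: "insert i (nbrs E i) \<subseteq> S"
    and nbi: "\<phi> ` nbrs E i = nbrs E' (\<phi> i)" and dgi: "\<forall>w\<in>nbrs E i. deg E w = deg E' (\<phi> w)"
  shows "drop_at B \<alpha> dt rate lamP lam0 E z \<pi> t S i = drop_at B \<alpha> dt rate lamP lam0 E' z' \<pi> t (\<phi> ` S) (\<phi> i)"
proof -
  have SD: "S \<subseteq> D" using good_sub[OF g] .
  have i: "i \<in> S" using iS by auto
  have inner: "(\<Sum>b\<in>acts (\<phi> ` S). act_prob \<pi> t (tr D \<phi> S x) b (\<phi> ` S) * exp_drops \<alpha> B dt (inflow (rate l) E' b (\<phi> i)) (tr D \<phi> S x (\<phi> i)))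
     = (\<Sum>a\<in>acts S. act_prob \<pi> t x a S * exp_drops \<alpha> B dt (inflow (rate l) E a i) (x i))" for l x
    by (subst sum.reindex_bij_betw[OF tr_acts[OF inj SD], symmetric])
       (simp add: act_prob_transport[OF inj SD] inflow_transport[OF inj SD iS nbi dgi] tr_apply[OF inj SD i])
  let ?L = "law B \<alpha> dt rate lamP lam0 E z \<pi>"
  let ?L' = "law B \<alpha> dt rate lamP lam0 E' z' \<pi>"
  have per: "(\<Sum>x\<in>cfgs B (\<phi> ` S). ?L' t (\<phi> ` S) l x * (\<Sum>b\<in>acts (\<phi> ` S). act_prob \<pi> t x b (\<phi> ` S) * exp_drops \<alpha> B dt (inflow (rate l) E' b (\<phi> i)) (x (\<phi> i))))
     = (\<Sum>x\<in>cfgs B S. ?L t S l x * (\<Sum>a\<in>acts S. act_prob \<pi> t x a S * exp_drops \<alpha> B dt (inflow (rate l) E a i) (x i)))" for l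
    by (subst sum.reindex_bij_betw[OF tr_cfgs[OF inj SD], symmetric])
       (intro sum.cong refl, simp add: inner law_transport[OF inj mk g])
  show ?thesis unfolding drop_at_def by (simp only: per)
qed

lemma ball_mono: "j \<le> k \<Longrightarrow> ball E r j \<subseteq> ball E r k"
proof (induction k)
  case 0 then show ?case by simp
next
  case (Suc k) then show ?case by (cases "j = Suc k") auto
qed

lemma ball_1: "ball E r 1 = insert r (nbrs E r)" by auto

lemma nbrs_ball: "u \<in> ball E r j \<Longrightarrow> nbrs E u \<subseteq> ball E r (Suc j)" by auto

lemma nb_ball: "S \<subseteq> ball E r j \<Longrightarrow> nb E S \<subseteq> ball E r (Suc j)"
  by (auto simp: nb_def)

lemma ball_map:
  assumes inj: "inj_on \<phi> (ball E r k)"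
    and ed: "\<forall>u\<in>ball E r k. \<forall>v\<in>ball E r k. E u v \<longleftrightarrow> E' (\<phi> u) (\<phi> v)"
    and cl: "\<forall>j<k. \<forall>u'\<in>ball E' (\<phi> r) j. nbrs E' u' \<subseteq> \<phi> ` ball E r k"
  shows "j \<le> k \<Longrightarrow> \<phi> ` ball E r j = ball E' (\<phi> r) j \<and> (j < k \<longrightarrow> (\<forall>u\<in>ball E r j. \<phi> ` nbrs E u = nbrs E' (\<phi> u)))"
proof (induction j)
  case 0
  have "\<phi> ` nbrs E r = nbrs E' (\<phi> r)" if "0 < k"
  proof
    show "\<phi> ` nbrs E r \<subseteq> nbrs E' (\<phi> r)"
    proof
      fix w assume "w \<in> \<phi> ` nbrs E r"
      then obtain v where v: "v \<in> nbrs E r" "w = \<phi> v" by auto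
      have "v \<in> ball E r k" "r \<in> ball E r k" using v ball_mono[of 1 k E r] that by auto
      then show "w \<in> nbrs E' (\<phi> r)" using ed v by (auto simp: nbrs_def)
    qed
    show "nbrs E' (\<phi> r) \<subseteq> \<phi> ` nbrs E r"
    proof
      fix w assume w: "w \<in> nbrs E' (\<phi> r)"
      have "nbrs E' (\<phi> r) \<subseteq> \<phi> ` ball E r k" using cl that by (metis ball.simps(1) singletonI)
      then obtain v where v: "v \<in> ball E r k" "w = \<phi> v" using w by blast
      have "r \<in> ball E r k" using ball_mono[of 0 k E r] by auto
      then show "w \<in> \<phi> ` nbrs E r" using ed v w by (auto simp: nbrs_def)
    qed
  qed
  then show ?case by auto
next
  case (Suc j)
  then have IH: "\<phi> ` ball E r j = ball E' (\<phi> r) j" and IH2: "\<forall>u\<in>ball E r j. \<phi> ` nbrs E u = nbrs E' (\<phi> u)"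
    by auto
  have A: "\<phi> ` ball E r (Suc j) = ball E' (\<phi> r) (Suc j)"
  proof -
    have "\<phi> ` ball E r (Suc j) = \<phi> ` ball E r j \<union> (\<Union>u\<in>ball E r j. \<phi> ` nbrs E u)" by auto
    also have "\<dots> = ball E' (\<phi> r) j \<union> (\<Union>u\<in>ball E r j. nbrs E' (\<phi> u))" using IH IH2 by auto
    also have "\<dots> = ball E' (\<phi> r) (Suc j)" unfolding ball.simps(2) IH[symmetric] image_image by simp
    finally show ?thesis .
  qed
  have B: "\<phi> ` nbrs E u = nbrs E' (\<phi> u)" if sk: "Suc j < k" and ub: "u \<in> ball E r (Suc j)" for u
  proof
    have uk: "u \<in> ball E r k" using ball_mono[of "Suc j" k E r] that by auto
    show "\<phi> ` nbrs E u \<subseteq> nbrs E' (\<phi> u)"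
    proof
      fix w assume "w \<in> \<phi> ` nbrs E u"
      then obtain v where v: "v \<in> nbrs E u" "w = \<phi> v" by auto
      have "v \<in> ball E r (Suc (Suc j))" using v(1) nbrs_ball[OF that(2)] by blast
      moreover have "ball E r (Suc (Suc j)) \<subseteq> ball E r k" using ball_mono[of "Suc (Suc j)" k E r] that(1) by simp
      ultimately have "v \<in> ball E r k" by blast
      then show "w \<in> nbrs E' (\<phi> u)" using ed v uk by (auto simp: nbrs_def)
    qed
    show "nbrs E' (\<phi> u) \<subseteq> \<phi> ` nbrs E u"
    proof
      fix w assume w: "w \<in> nbrs E' (\<phi> u)"
      have "\<phi> u \<in> ball E' (\<phi> r) (Suc j)" using A that by auto
      then have "nbrs E' (\<phi> u) \<subseteq> \<phi> ` ball E r k" using cl sk by blast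
      then obtain v where v: "v \<in> ball E r k" "w = \<phi> v" using w by blast
      then show "w \<in> \<phi> ` nbrs E u" using ed v w uk by (auto simp: nbrs_def)
    qed
  qed
  show ?case using A B by auto
qed

lemma ball_iso_nbrs:
  assumes "ball_iso k (V, E, z, r) (V', E', z', r')"
  obtains \<phi> where "bij_betw \<phi> (ball E r k) (ball E' r' k)" "\<phi> r = r'"
    "\<forall>u\<in>ball E r k. z' (\<phi> u) = z u"
    "\<And>j. j < k \<Longrightarrow> \<forall>u\<in>ball E r j. \<phi> ` nbrs E u = nbrs E' (\<phi> u)"
proof -
  obtain \<phi> where b: "bij_betw \<phi> (ball E r k) (ball E' r' k)" and r: "\<phi> r = r'"
    and ed: "\<forall>u\<in>ball E r k. \<forall>v\<in>ball E r k. E u v \<longleftrightarrow> E' (\<phi> u) (\<phi> v)"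
    and mk: "\<forall>u\<in>ball E r k. z' (\<phi> u) = z u"
    using assms unfolding ball_iso_def by auto
  have cl: "\<forall>j<k. \<forall>u'\<in>ball E' (\<phi> r) j. nbrs E' u' \<subseteq> \<phi> ` ball E r k"
  proof (intro allI impI ballI)
    fix j u' assume "j < k" "u' \<in> ball E' (\<phi> r) j"
    then have "nbrs E' u' \<subseteq> ball E' r' k" using nbrs_ball[of u' E' r' j] ball_mono[of "Suc j" k E' r'] r by auto
    then show "nbrs E' u' \<subseteq> \<phi> ` ball E r k" using b by (simp add: bij_betw_def)
  qed
  have "\<forall>u\<in>ball E r j. \<phi> ` nbrs E u = nbrs E' (\<phi> u)" if "j < k" for j
  proof -
    have "j \<le> k" using that by simp
    from ball_map[OF bij_betw_imp_inj_on[OF b] ed cl this] show ?thesis using that by blast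
  qed
  then show ?thesis using that b r mk by blast
qed

lemma ball_good:
  assumes inj: "inj_on \<phi> (ball E r k)"
    and NB: "\<And>j. j < k \<Longrightarrow> \<forall>u\<in>ball E r j. \<phi> ` nbrs E u = nbrs E' (\<phi> u)"
  shows "S \<subseteq> ball E r j \<Longrightarrow> j + t + 1 \<le> k \<Longrightarrow> good E E' \<phi> (ball E r k) t S"
proof (induction t arbitrary: S j)
  case 0 then show ?case using ball_mono[of j k E r] by auto
next
  case (Suc t)
  have SD: "S \<subseteq> ball E r k" using Suc.prems ball_mono[of j k E r] by auto
  have nbS: "\<forall>u\<in>S. \<phi> ` nbrs E u = nbrs E' (\<phi> u)" using NB[of j] Suc.prems by auto
  have dg: "deg E w = deg E' (\<phi> w)" if "u \<in> S" "w \<in> nbrs E u" for u w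
  proof -
    have w1: "w \<in> ball E r (Suc j)" using that Suc.prems by auto
    then have e: "\<phi> ` nbrs E w = nbrs E' (\<phi> w)" using NB[of "Suc j"] Suc.prems by auto
    have "nbrs E w \<subseteq> ball E r (Suc (Suc j))" using nbrs_ball[OF w1] .
    moreover have "ball E r (Suc (Suc j)) \<subseteq> ball E r k" using ball_mono[of "Suc (Suc j)" k E r] Suc.prems by simp
    ultimately have "nbrs E w \<subseteq> ball E r k" by (rule subset_trans)
    then have "inj_on \<phi> (nbrs E w)" using inj inj_on_subset by blast
    then show ?thesis unfolding deg_def e[symmetric] by (simp add: card_image)
  qed
  have "good E E' \<phi> (ball E r k) t (nb E S)"
    using Suc.IH[OF nb_ball[OF Suc.prems(1)]] Suc.prems by auto
  then show ?case using SD nbS dg by auto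
qed

definition droot :: "nat \<Rightarrow> real \<Rightarrow> real \<Rightarrow> ('l::finite \<Rightarrow> real) \<Rightarrow> ('l \<Rightarrow> 'l \<Rightarrow> real) \<Rightarrow> ('l \<Rightarrow> real)
   \<Rightarrow> (nat \<Rightarrow> nat \<Rightarrow> real) \<Rightarrow> nat \<Rightarrow> rgraph \<Rightarrow> real" where
  "droot B \<alpha> dt rate lamP lam0 \<pi> t G = (case G of (V, E, z, r) \<Rightarrow>
     drop_at B \<alpha> dt rate lamP lam0 E z \<pi> t (insert r (nbrs E r)) r)"

lemma droot_iso:
  assumes "ball_iso k G H" "t + 2 \<le> k"
  shows "droot B \<alpha> dt rate lamP lam0 \<pi> t G = droot B \<alpha> dt rate lamP lam0 \<pi> t H"
proof -
  obtain V E z r V' E' z' r' where G: "G = (V, E, z, r)" and H: "H = (V', E', z', r')" by (cases G, cases H) auto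
  obtain \<phi> where b: "bij_betw \<phi> (ball E r k) (ball E' r' k)" and r: "\<phi> r = r'"
    and mk: "\<forall>u\<in>ball E r k. z' (\<phi> u) = z u"
    and NB: "\<And>j. j < k \<Longrightarrow> \<forall>u\<in>ball E r j. \<phi> ` nbrs E u = nbrs E' (\<phi> u)"
    using ball_iso_nbrs[OF assms(1)[unfolded G H]] by metis
  have inj: "inj_on \<phi> (ball E r k)" using b by (rule bij_betw_imp_inj_on)
  have g: "good E E' \<phi> (ball E r k) t (ball E r 1)"
    by (rule ball_good[OF inj NB, of "ball E r 1" 1]) (use assms(2) in auto)
  have nbi: "\<phi> ` nbrs E r = nbrs E' (\<phi> r)" using NB[of 0] assms(2) by auto
  have dgi: "\<forall>w\<in>nbrs E r. deg E w = deg E' (\<phi> w)"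
  proof
    fix w assume w: "w \<in> nbrs E r"
    have e: "\<phi> ` nbrs E w = nbrs E' (\<phi> w)" using NB[of 1] assms(2) w by auto
    have "nbrs E w \<subseteq> ball E r 2" using w by (auto simp: numeral_2_eq_2)
    then have "nbrs E w \<subseteq> ball E r k" using ball_mono[of 2 k E r] assms(2) by auto
    then have "inj_on \<phi> (nbrs E w)" using inj inj_on_subset by blast
    then show "deg E w = deg E' (\<phi> w)" unfolding deg_def e[symmetric] by (simp add: card_image)
  qed
  have "drop_at B \<alpha> dt rate lamP lam0 E z \<pi> t (ball E r 1) r = drop_at B \<alpha> dt rate lamP lam0 E' z' \<pi> t (\<phi> ` ball E r 1) (\<phi> r)"
    by (rule drop_transport[OF inj mk g _ nbi dgi]) auto
  moreover have "\<phi> ` ball E r 1 = insert r' (nbrs E' r')" using nbi r by (simp add: ball_1)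
  ultimately show ?thesis unfolding droot_def G H using r by (simp add: ball_1)
qed

lemma droot_iso_deg:
  assumes "ball_iso k (V, E, z, r) (V', E', z', r')" "1 \<le> k" "finite (nbrs E r)"
  shows "deg E r = deg E' r'"
proof -
  obtain \<phi> where b: "bij_betw \<phi> (ball E r k) (ball E' r' k)" and r: "\<phi> r = r'"
    and NB: "\<And>j. j < k \<Longrightarrow> \<forall>u\<in>ball E r j. \<phi> ` nbrs E u = nbrs E' (\<phi> u)"
    using ball_iso_nbrs[OF assms(1)] by metis
  have inj: "inj_on \<phi> (ball E r k)" using b by (rule bij_betw_imp_inj_on)
  have e: "\<phi> ` nbrs E r = nbrs E' r'" using NB[of 0] assms(2) r by auto
  have "nbrs E r \<subseteq> ball E r k" using ball_mono[of 1 k E r] assms(2) by auto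
  then have "inj_on \<phi> (nbrs E r)" using inj inj_on_subset by blast
  then show ?thesis unfolding deg_def e[symmetric] by (simp add: card_image)
qed

lemma gstar_closed:
  assumes "(V, E, z, r) \<in> Gstar_set B"
  shows "closed_dom B E z V" "r \<in> V"
  using assms unfolding Gstar_set_def wf_lf_def closed_dom_def nbrs_def by auto

definition rdeg :: "rgraph \<Rightarrow> nat" where
  "rdeg G = (case G of (V, E, z, r) \<Rightarrow> deg E r)"

lemma J_root_eq: "J_root B \<alpha> dt \<gamma> rate lamP lam0 G \<pi> = - (\<Sum>t. \<gamma> ^ t * droot B \<alpha> dt rate lamP lam0 \<pi> t G)"
  by (cases G) (simp add: J_root_def droot_def)

locale qsys =
  fixes B :: nat and \<alpha> dt \<gamma> :: real and rate :: "'l::finite \<Rightarrow> real" and lamP :: "'l \<Rightarrow> 'l \<Rightarrow> real" and lam0 :: "'l \<Rightarrow> real" and \<pi> :: "nat \<Rightarrow> nat \<Rightarrow> real"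
    and R :: real
  assumes al: "\<alpha> > 0" and dt: "dt > 0" and ga: "0 < \<gamma>" "\<gamma> < 1"
    and rate: "\<forall>l. rate l \<ge> 0" "\<forall>l. rate l \<le> R"
    and lamP: "\<forall>l l'. lamP l l' \<ge> 0" "\<forall>l. (\<Sum>l'\<in>UNIV. lamP l l') = 1"
    and lam0: "\<forall>l. lam0 l \<ge> 0" "(\<Sum>l\<in>UNIV. lam0 l) = 1"
    and pol: "\<forall>t s. s \<le> B \<longrightarrow> 0 \<le> \<pi> t s \<and> \<pi> t s \<le> 1"

context qsys
begin

lemma R_nonneg: "R \<ge> 0" using rate by (meson order_trans)

lemma droot_bounds:
  assumes "G \<in> Gstar_set B"
  shows "0 \<le> droot B \<alpha> dt rate lamP lam0 \<pi> t G \<and> droot B \<alpha> dt rate lamP lam0 \<pi> t G \<le> R * (1 + real (rdeg G)) * dt"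
proof -
  obtain V E z r where G: "G = (V, E, z, r)" by (cases G) auto
  have cd: "closed_dom B E z V" and rV: "r \<in> V" using gstar_closed assms G by auto
  have "finite (insert r (nbrs E r))" "insert r (nbrs E r) \<subseteq> V"
    using cd rV by (auto simp: closed_dom_def)
  have "insert r (nbrs E r) \<subseteq> insert r (nbrs E r)" by simp
  from drop_bounds[OF pol lamP lam0 rate _ _ cd \<open>finite (insert r (nbrs E r))\<close> \<open>insert r (nbrs E r) \<subseteq> V\<close> this, of \<alpha> dt t] al dt
  show ?thesis unfolding G droot_def rdeg_def by simp
qed

lemma droot_summable:
  assumes "G \<in> Gstar_set B"
  shows "summable (\<lambda>t. \<gamma> ^ t * droot B \<alpha> dt rate lamP lam0 \<pi> t G)"
proof (rule summable_comparison_test[where g = "\<lambda>t. R * (1 + real (rdeg G)) * dt * \<gamma> ^ t"])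
  show "\<exists>N. \<forall>n\<ge>N. norm (\<gamma> ^ n * droot B \<alpha> dt rate lamP lam0 \<pi> n G) \<le> R * (1 + real (rdeg G)) * dt * \<gamma> ^ n"
    using droot_bounds[OF assms] ga by (auto simp: abs_mult mult.commute intro!: mult_left_mono)
  show "summable (\<lambda>t. R * (1 + real (rdeg G)) * dt * \<gamma> ^ t)"
    using ga by (intro summable_mult summable_geometric) auto
qed

lemma J_root_bounds:
  assumes "G \<in> Gstar_set B"
  shows "- (R * (1 + real (rdeg G)) * dt / (1 - \<gamma>)) \<le> J_root B \<alpha> dt \<gamma> rate lamP lam0 G \<pi> \<and> J_root B \<alpha> dt \<gamma> rate lamP lam0 G \<pi> \<le> 0"
proof -
  let ?C = "R * (1 + real (rdeg G)) * dt"
  have s: "summable (\<lambda>t. \<gamma> ^ t * droot B \<alpha> dt rate lamP lam0 \<pi> t G)" by (rule droot_summable[OF assms])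
  have sg: "summable (\<lambda>t. ?C * \<gamma> ^ t)" using ga by (intro summable_mult summable_geometric) auto
  have "(\<Sum>t. \<gamma> ^ t * droot B \<alpha> dt rate lamP lam0 \<pi> t G) \<le> (\<Sum>t. ?C * \<gamma> ^ t)"
    using droot_bounds[OF assms] ga by (intro suminf_le s sg) (auto simp: mult.commute intro!: mult_left_mono)
  also have "\<dots> = ?C / (1 - \<gamma>)" using ga by (simp add: suminf_mult suminf_geometric)
  finally have up: "(\<Sum>t. \<gamma> ^ t * droot B \<alpha> dt rate lamP lam0 \<pi> t G) \<le> ?C / (1 - \<gamma>)" .
  have "0 \<le> (\<Sum>t. \<gamma> ^ t * droot B \<alpha> dt rate lamP lam0 \<pi> t G)"
    using droot_bounds[OF assms] ga by (intro suminf_nonneg s) auto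
  then show ?thesis using up unfolding J_root_eq by simp
qed

lemma J_root_cont:
  assumes G: "G \<in> Gstar_set B" and e: "\<epsilon> > 0"
  shows "\<exists>k. \<forall>H\<in>Gstar_set B. ball_iso k G H \<longrightarrow>
     \<bar>J_root B \<alpha> dt \<gamma> rate lamP lam0 H \<pi> - J_root B \<alpha> dt \<gamma> rate lamP lam0 G \<pi>\<bar> < \<epsilon>"
proof -
  define C where "C = R * (1 + real (rdeg G)) * dt"
  have C0: "C \<ge> 0" unfolding C_def using R_nonneg dt by simp
  have "\<epsilon> * (1 - \<gamma>) / (2 * C + 1) > 0" using e ga C0 by simp
  then obtain n where n: "\<gamma> ^ n < \<epsilon> * (1 - \<gamma>) / (2 * C + 1)" using real_arch_pow_inv ga by blast
  show ?thesis
  proof (intro exI[of _ "n + 2"] ballI impI)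
    fix H assume H: "H \<in> Gstar_set B" and iso: "ball_iso (n + 2) G H"
    let ?dG = "\<lambda>t. droot B \<alpha> dt rate lamP lam0 \<pi> t G" and ?dH = "\<lambda>t. droot B \<alpha> dt rate lamP lam0 \<pi> t H"
    obtain V E z r V' E' z' r' where GG: "G = (V, E, z, r)" and HH: "H = (V', E', z', r')" by (cases G, cases H) auto
    have "finite (nbrs E r)" using gstar_closed[OF G[unfolded GG]] by (auto simp: closed_dom_def)
    then have "rdeg H = rdeg G" using droot_iso_deg[OF iso[unfolded GG HH]] by (simp add: rdeg_def GG HH)
    then have bH: "0 \<le> ?dH t \<and> ?dH t \<le> C" for t using droot_bounds[OF H] unfolding C_def by simp
    have bG: "0 \<le> ?dG t \<and> ?dG t \<le> C" for t using droot_bounds[OF G] unfolding C_def by simp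
    have eq: "?dG t = ?dH t" if "t \<le> n" for t using droot_iso[OF iso] that by simp
    define f where "f = (\<lambda>t. \<gamma> ^ t * (?dH t - ?dG t))"
    have sf: "summable f" unfolding f_def right_diff_distrib
      by (intro summable_diff droot_summable G H)
    have "J_root B \<alpha> dt \<gamma> rate lamP lam0 H \<pi> - J_root B \<alpha> dt \<gamma> rate lamP lam0 G \<pi> = - suminf f"
      unfolding J_root_eq f_def right_diff_distrib
      using suminf_diff[OF droot_summable[OF H] droot_summable[OF G]] by simp
    also have "suminf f = (\<Sum>m. f (m + Suc n))"
      using suminf_split_initial_segment[OF sf, of "Suc n"] eq by (simp add: f_def)
    finally have d: "\<bar>J_root B \<alpha> dt \<gamma> rate lamP lam0 H \<pi> - J_root B \<alpha> dt \<gamma> rate lamP lam0 G \<pi>\<bar> = \<bar>\<Sum>m. f (m + Suc n)\<bar>"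
      by simp
    have fb: "norm (f (m + Suc n)) \<le> C * \<gamma> ^ Suc n * \<gamma> ^ m" for m
    proof -
      have "\<bar>?dH (m + Suc n) - ?dG (m + Suc n)\<bar> \<le> C" using bH bG by (smt (verit))
      then have "\<gamma> ^ (m + Suc n) * \<bar>?dH (m + Suc n) - ?dG (m + Suc n)\<bar> \<le> \<gamma> ^ (m + Suc n) * C"
        using ga by (intro mult_left_mono) auto
      then show ?thesis unfolding f_def using ga by (simp add: abs_mult power_add mult_ac)
    qed
    have sg: "summable (\<lambda>m. C * \<gamma> ^ Suc n * \<gamma> ^ m)" using ga by (intro summable_mult summable_geometric) auto
    have sn: "summable (\<lambda>m. norm (f (m + Suc n)))"
      by (rule summable_comparison_test[OF _ sg]) (use fb in auto)
    have "\<bar>\<Sum>m. f (m + Suc n)\<bar> \<le> (\<Sum>m. norm (f (m + Suc n)))"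
      using summable_norm[OF sn] by simp
    also have "\<dots> \<le> (\<Sum>m. C * \<gamma> ^ Suc n * \<gamma> ^ m)" by (rule suminf_le[OF fb sn sg])
    also have "\<dots> = C * \<gamma> ^ Suc n / (1 - \<gamma>)" using ga by (simp add: suminf_mult suminf_geometric)
    also have "\<dots> \<le> C * \<gamma> ^ n / (1 - \<gamma>)"
      using ga C0 by (intro divide_right_mono mult_left_mono) (auto simp: power_Suc2 mult_left_le)
    also have "\<dots> \<le> C * (\<epsilon> * (1 - \<gamma>) / (2 * C + 1)) / (1 - \<gamma>)"
      using ga C0 n by (intro divide_right_mono mult_left_mono) auto
    also have "\<dots> = \<epsilon> * (C / (2 * C + 1))" using ga C0 by simp
    also have "\<dots> < \<epsilon>" using e C0 by (simp add: field_simps add_pos_nonneg)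
    finally show "\<bar>J_root B \<alpha> dt \<gamma> rate lamP lam0 H \<pi> - J_root B \<alpha> dt \<gamma> rate lamP lam0 G \<pi>\<bar> < \<epsilon>"
      using d by simp
  qed
qed

end

lemma ball_iso_sym:
  assumes "ball_iso k (V, E, z, r) (V', E', z', r')"
  shows "ball_iso k (V', E', z', r') (V, E, z, r)"
proof -
  obtain \<phi> where b: "bij_betw \<phi> (ball E r k) (ball E' r' k)" and r: "\<phi> r = r'"
    and ed: "\<forall>u\<in>ball E r k. \<forall>v\<in>ball E r k. E u v \<longleftrightarrow> E' (\<phi> u) (\<phi> v)"
    and mk: "\<forall>u\<in>ball E r k. z' (\<phi> u) = z u"
    using assms unfolding ball_iso_def by auto
  define \<psi> where "\<psi> = inv_into (ball E r k) \<phi>"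
  have b2: "bij_betw \<psi> (ball E' r' k) (ball E r k)" unfolding \<psi>_def by (rule bij_betw_inv_into[OF b])
  have rk: "r \<in> ball E r k" using ball_mono[of 0 k E r] by auto
  have r2: "\<psi> r' = r" unfolding \<psi>_def r[symmetric] by (rule inv_into_f_f[OF bij_betw_imp_inj_on[OF b] rk])
  have fi: "\<phi> (\<psi> u') = u'" if "u' \<in> ball E' r' k" for u'
    unfolding \<psi>_def using b that by (simp add: bij_betw_def f_inv_into_f)
  have pin: "\<psi> u' \<in> ball E r k" if "u' \<in> ball E' r' k" for u' using b2 that by (auto simp: bij_betw_def)
  have ed2: "\<forall>u\<in>ball E' r' k. \<forall>v\<in>ball E' r' k. E' u v \<longleftrightarrow> E (\<psi> u) (\<psi> v)"
    using ed fi pin by metis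
  have mk2: "\<forall>u\<in>ball E' r' k. z (\<psi> u) = z' u" using mk fi pin by metis
  show ?thesis unfolding ball_iso_def using b2 r2 ed2 mk2 by auto
qed

lemma ball_sub:
  assumes "closed_dom B E z V" "r \<in> V"
  shows "finite (ball E r k) \<and> ball E r k \<subseteq> V"
proof (induction k)
  case 0 then show ?case using assms by auto
next
  case (Suc k)
  have "finite (\<Union> (nbrs E ` ball E r k))" "\<Union> (nbrs E ` ball E r k) \<subseteq> V"
    using Suc assms(1) by (auto simp: closed_dom_def)
  then show ?case using Suc by simp
qed

definition dec :: "nat \<times> (nat \<times> nat) list \<times> nat list \<times> nat \<Rightarrow> rgraph" where
  "dec c = (case c of (m, es, zs, r) \<Rightarrow> ({0..<m}, \<lambda>u v. (u, v) \<in> set es, \<lambda>u. if u < length zs then zs ! u else 0, r))"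

lemma canon_exists:
  assumes G: "G \<in> Gstar_set B"
  shows "\<exists>C\<in>range dec. C \<in> Gstar_set B \<and> ball_iso k G C"
proof -
  obtain V E z r where GG: "G = (V, E, z, r)" by (cases G) auto
  have cd: "closed_dom B E z V" and rV: "r \<in> V" using gstar_closed G GG by auto
  have wf: "wf_lf B (V, E, z)" using G GG by (simp add: Gstar_set_def)
  define X where "X = ball E r k"
  have fX: "finite X" and XV: "X \<subseteq> V" using ball_sub[OF cd rV] X_def by auto
  define m where "m = card X"
  obtain h where h: "bij_betw h X {0..<m}" using ex_bij_betw_finite_nat[OF fX] m_def by auto
  define g where "g = inv_into X h"
  have gin: "g u \<in> X" if "u < m" for u using h that unfolding g_def
    by (metis atLeastLessThan_iff bij_betw_def inv_into_into zero_le)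
  have hg: "h (g u) = u" if "u < m" for u using h that unfolding g_def
    by (simp add: bij_betw_def f_inv_into_f)
  have gh: "g (h u) = u" if "u \<in> X" for u using h that unfolding g_def
    by (simp add: bij_betw_def inv_into_f_f)
  have hX: "h u < m" if "u \<in> X" for u using h that by (auto simp: bij_betw_def)
  have rX: "r \<in> X" unfolding X_def using ball_mono[of 0 k E r] by auto
  define EC where "EC = (\<lambda>u v. u < m \<and> v < m \<and> E (g u) (g v))"
  define zC where "zC = (\<lambda>u. if u < m then z (g u) else 0)"
  define C where "C = ({0..<m}, EC, zC, h r)"
  have finE: "finite {(u, v). EC u v}"
    by (rule finite_subset[of _ "{0..<m} \<times> {0..<m}"]) (auto simp: EC_def)
  obtain es where es: "set es = {(u, v). EC u v}" using finite_list[OF finE] by blast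
  have "C = dec (m, es, map zC [0..<m], h r)"
    unfolding C_def dec_def using es by (auto simp: fun_eq_iff zC_def EC_def)
  then have Cdec: "C \<in> range dec" by blast
  have CG: "C \<in> Gstar_set B"
  proof -
    have "EC u v \<Longrightarrow> EC v u" for u v using wf unfolding EC_def wf_lf_def by auto
    moreover have "\<not> EC u u" for u using wf unfolding EC_def wf_lf_def by auto
    moreover have "finite (nbrs EC u)" for u
      by (rule finite_subset[of _ "{0..<m}"]) (auto simp: nbrs_def EC_def)
    moreover have "zC u \<le> B" if "u < m" for u using cd XV gin[OF that] that
      by (auto simp: zC_def closed_dom_def)
    ultimately show ?thesis unfolding C_def Gstar_set_def wf_lf_def using hX[OF rX]
      by (auto simp: EC_def)
  qed
  have inj: "inj_on h (ball E r k)" using h X_def by (simp add: bij_betw_def)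
  have ed: "\<forall>u\<in>ball E r k. \<forall>v\<in>ball E r k. E u v \<longleftrightarrow> EC (h u) (h v)"
    using gh hX X_def by (auto simp: EC_def)
  have cl: "\<forall>j<k. \<forall>u'\<in>ball EC (h r) j. nbrs EC u' \<subseteq> h ` ball E r k"
  proof (intro allI impI ballI subsetI)
    fix j u' w assume "w \<in> nbrs EC u'"
    then have "w < m" by (auto simp: nbrs_def EC_def)
    then show "w \<in> h ` ball E r k" using hg gin X_def by (metis image_eqI)
  qed
  have bb: "h ` ball E r k = ball EC (h r) k" using ball_map[OF inj ed cl, of k] by simp
  have "ball_iso k G C"
    unfolding GG C_def ball_iso_def
    using inj bb ed gh X_def by (auto simp: bij_betw_def zC_def hX)
  then show ?thesis using Cdec CG by blast
qed

lemma space_Gstar: "space (Gstar_space B) = Gstar_set B"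
  unfolding Gstar_space_def by (rule space_measure_of_conv)

lemma cyl_sets:
  assumes "C \<in> Gstar_set B"
  shows "{H \<in> Gstar_set B. ball_iso k C H} \<in> sets (Gstar_space B)"
proof -
  have sub: "{{H \<in> Gstar_set B. ball_iso k G H} | k G. G \<in> Gstar_set B} \<subseteq> Pow (Gstar_set B)" by auto
  show ?thesis unfolding Gstar_space_def sets_measure_of[OF sub]
    using assms by (intro sigma_sets.Basic) blast
qed

lemma inv_measurable:
  fixes g :: "rgraph \<Rightarrow> real"
  assumes inv: "\<forall>G\<in>Gstar_set B. \<forall>H\<in>Gstar_set B. ball_iso k G H \<longrightarrow> g G = g H"
  shows "g \<in> borel_measurable (Gstar_space B)"
proof (rule measurableI)
  fix A :: "real set" assume "A \<in> sets borel"
  define I where "I = {C \<in> range dec. C \<in> Gstar_set B \<and> g C \<in> A}"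
  have cI: "countable I" unfolding I_def
    by (rule countable_subset[of _ "range dec"]) (auto intro: countable_image)
  have eq: "g -` A \<inter> space (Gstar_space B) = (\<Union>C\<in>I. {H \<in> Gstar_set B. ball_iso k C H})"
  proof
    show "g -` A \<inter> space (Gstar_space B) \<subseteq> (\<Union>C\<in>I. {H \<in> Gstar_set B. ball_iso k C H})"
    proof
      fix G assume "G \<in> g -` A \<inter> space (Gstar_space B)"
      then have G: "G \<in> Gstar_set B" "g G \<in> A" by (auto simp: space_Gstar)
      obtain C where C: "C \<in> range dec" "C \<in> Gstar_set B" "ball_iso k G C" using canon_exists[OF G(1)] by blast
      have CG: "ball_iso k C G" using C(3) ball_iso_sym by (cases G, cases C) auto
      have "g C = g G" using inv C(2) G(1) CG by blast
      then have "C \<in> I" unfolding I_def using C(1,2) G(2) by simp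
      then show "G \<in> (\<Union>C\<in>I. {H \<in> Gstar_set B. ball_iso k C H})"
        using CG G(1) by blast
    qed
    show "(\<Union>C\<in>I. {H \<in> Gstar_set B. ball_iso k C H}) \<subseteq> g -` A \<inter> space (Gstar_space B)"
      using inv unfolding I_def space_Gstar by fastforce
  qed
  show "g -` A \<inter> space (Gstar_space B) \<in> sets (Gstar_space B)"
    unfolding eq using cI by (intro sets.countable_UN'') (auto simp: I_def intro: cyl_sets)
qed simp

lemma sys_closed:
  assumes "sys_graph d B (V, E, z)"
  shows "closed_dom B E z V" "finite V" "\<forall>i\<in>V. deg E i \<le> d"
  using assms unfolding sys_graph_def wf_lf_def closed_dom_def nbrs_def by auto

definition compE :: "(nat \<Rightarrow> nat \<Rightarrow> bool) \<Rightarrow> nat \<Rightarrow> nat \<Rightarrow> nat \<Rightarrow> bool" where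
  "compE E i = (\<lambda>u v. E u v \<and> u \<in> {j. E\<^sup>*\<^sup>* i j} \<and> v \<in> {j. E\<^sup>*\<^sup>* i j})"

lemma component_eq: "component (V, E, z) i = ({j. E\<^sup>*\<^sup>* i j}, compE E i, z, i)"
  by (simp add: component_def compE_def Let_def)

lemma comp_nbrs: "E\<^sup>*\<^sup>* i u \<Longrightarrow> nbrs (compE E i) u = nbrs E u"
  unfolding nbrs_def compE_def by (auto intro: rtranclp.rtrancl_into_rtrancl)

lemma comp_deg: "E\<^sup>*\<^sup>* i u \<Longrightarrow> deg (compE E i) u = deg E u"
  unfolding deg_def by (simp add: comp_nbrs)

lemma comp_reach: "E\<^sup>*\<^sup>* i u \<Longrightarrow> w \<in> nbrs E u \<Longrightarrow> E\<^sup>*\<^sup>* i w"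
  by (auto simp: nbrs_def intro: rtranclp.rtrancl_into_rtrancl)

lemma comp_good: "S \<subseteq> {j. E\<^sup>*\<^sup>* i j} \<Longrightarrow> good E (compE E i) id {j. E\<^sup>*\<^sup>* i j} t S"
proof (induction t arbitrary: S)
  case 0 then show ?case by simp
next
  case (Suc t)
  have "nb E S \<subseteq> {j. E\<^sup>*\<^sup>* i j}" using Suc.prems
    by (auto simp: nb_def nbrs_def intro: rtranclp.rtrancl_into_rtrancl)
  moreover have "\<forall>u\<in>S. nbrs E u = nbrs (compE E i) u \<and> (\<forall>w\<in>nbrs E u. deg E w = deg (compE E i) w)"
    using Suc.prems comp_nbrs comp_deg comp_reach by (metis mem_Collect_eq subsetD)
  ultimately show ?case using Suc by auto
qed

lemma comp_drop:
  assumes "S \<subseteq> {j. E\<^sup>*\<^sup>* i j}" "insert u (nbrs E u) \<subseteq> S"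
  shows "drop_at B \<alpha> dt rate lamP lam0 E z \<pi> t S u = drop_at B \<alpha> dt rate lamP lam0 (compE E i) z \<pi> t S u"
proof -
  have uc: "E\<^sup>*\<^sup>* i u" using assms by auto
  have "drop_at B \<alpha> dt rate lamP lam0 E z \<pi> t S u = drop_at B \<alpha> dt rate lamP lam0 (compE E i) z \<pi> t (id ` S) (id u)"
    by (rule drop_transport[OF inj_on_id _ comp_good[OF assms(1)] assms(2)])
       (use uc comp_nbrs comp_deg comp_reach in auto)
  then show ?thesis by simp
qed

definition gdeg :: "nat \<Rightarrow> rgraph \<Rightarrow> real" where
  "gdeg d G = (if rdeg G \<le> d then 0 else 1)"

lemma lw_avg_gdeg:
  assumes "sys_graph d B G"
  shows "lw_avg (gdeg d) G = 0"
proof -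
  obtain V E z where G: "G = (V, E, z)" by (cases G) auto
  have "gdeg d (component G i) = 0" if "i \<in> V" for i
    using sys_closed(3)[OF assms[unfolded G]] that
    by (simp add: G component_eq gdeg_def rdeg_def comp_deg)
  then show ?thesis unfolding lw_avg_def G by simp
qed

lemma gdeg_cont: "lw_continuous B (gdeg d)"
  unfolding lw_continuous_def
proof (intro ballI allI impI exI[of _ 1])
  fix G H :: rgraph and \<epsilon> :: real assume G: "G \<in> Gstar_set B" and H: "H \<in> Gstar_set B" and e: "\<epsilon> > 0"
    and iso: "ball_iso 1 G H"
  obtain V E z r V' E' z' r' where GG: "G = (V, E, z, r)" and HH: "H = (V', E', z', r')" by (cases G, cases H) auto
  have "finite (nbrs E r)" using gstar_closed[OF G[unfolded GG]] by (auto simp: closed_dom_def)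
  then have "rdeg H = rdeg G" using droot_iso_deg[OF iso[unfolded GG HH]] by (simp add: rdeg_def GG HH)
  then show "\<bar>gdeg d H - gdeg d G\<bar> < \<epsilon>" using e by (simp add: gdeg_def)
qed

lemma gdeg_bounded: "lw_bounded B (gdeg d)"
  unfolding lw_bounded_def gdeg_def by (intro exI[of _ 1]) auto

lemma gdeg_meas: "gdeg d \<in> borel_measurable (Gstar_space B)"
proof (rule inv_measurable[of _ 1], intro ballI impI)
  fix G H assume G: "G \<in> Gstar_set B" and H: "H \<in> Gstar_set B" and iso: "ball_iso 1 G H"
  obtain V E z r V' E' z' r' where GG: "G = (V, E, z, r)" and HH: "H = (V', E', z', r')" by (cases G, cases H) auto
  have "finite (nbrs E r)" using gstar_closed[OF G[unfolded GG]] by (auto simp: closed_dom_def)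
  then have "rdeg H = rdeg G" using droot_iso_deg[OF iso[unfolded GG HH]] by (simp add: rdeg_def GG HH)
  then show "gdeg d G = gdeg d H" by (simp add: gdeg_def)
qed

context qsys
begin

lemma droot_meas: "droot B \<alpha> dt rate lamP lam0 \<pi> t \<in> borel_measurable (Gstar_space B)"
  by (rule inv_measurable[of _ "t + 2"]) (auto intro: droot_iso)

lemma J_root_meas: "(\<lambda>G. J_root B \<alpha> dt \<gamma> rate lamP lam0 G \<pi>) \<in> borel_measurable (Gstar_space B)"
proof (rule borel_measurable_LIMSEQ_real[where u = "\<lambda>n G. - (\<Sum>t<n. \<gamma> ^ t * droot B \<alpha> dt rate lamP lam0 \<pi> t G)"])
  fix G assume "G \<in> space (Gstar_space B)"
  then have G: "G \<in> Gstar_set B" by (simp add: space_Gstar)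
  show "(\<lambda>n. - (\<Sum>t<n. \<gamma> ^ t * droot B \<alpha> dt rate lamP lam0 \<pi> t G)) \<longlonglongrightarrow> J_root B \<alpha> dt \<gamma> rate lamP lam0 G \<pi>"
    unfolding J_root_eq by (intro tendsto_minus summable_LIMSEQ droot_summable G)
next
  fix n
  show "(\<lambda>G. - (\<Sum>t<n. \<gamma> ^ t * droot B \<alpha> dt rate lamP lam0 \<pi> t G)) \<in> borel_measurable (Gstar_space B)"
    by (intro borel_measurable_uminus borel_measurable_sum borel_measurable_times borel_measurable_const droot_meas)
qed

end

context qsys
begin

lemma dropV_bounds:
  assumes S: "sys_graph d B (V, E, z)" and i: "i \<in> V"
  shows "0 \<le> drop_at B \<alpha> dt rate lamP lam0 E z \<pi> t V i \<and> drop_at B \<alpha> dt rate lamP lam0 E z \<pi> t V i \<le> R * (1 + real d) * dt"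
proof -
  have cd: "closed_dom B E z V" and fV: "finite V" and dg: "deg E i \<le> d" using sys_closed[OF S] i by auto
  have "insert i (nbrs E i) \<subseteq> V" using cd i by (auto simp: closed_dom_def)
  from drop_bounds[OF pol lamP lam0 rate _ _ cd fV order_refl this, of \<alpha> dt t] al dt
  have b: "0 \<le> drop_at B \<alpha> dt rate lamP lam0 E z \<pi> t V i \<and> drop_at B \<alpha> dt rate lamP lam0 E z \<pi> t V i \<le> R * (1 + real (deg E i)) * dt"
    by simp
  have "R * (1 + real (deg E i)) * dt \<le> R * (1 + real d) * dt"
    using dg R_nonneg dt by (intro mult_right_mono mult_left_mono) auto
  then show ?thesis using b by linarith
qed

lemma dropV_summable:
  assumes S: "sys_graph d B (V, E, z)" and i: "i \<in> V"
  shows "summable (\<lambda>t. \<gamma> ^ t * drop_at B \<alpha> dt rate lamP lam0 E z \<pi> t V i)"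
proof (rule summable_comparison_test[where g = "\<lambda>t. R * (1 + real d) * dt * \<gamma> ^ t"])
  show "\<exists>N. \<forall>n\<ge>N. norm (\<gamma> ^ n * drop_at B \<alpha> dt rate lamP lam0 E z \<pi> n V i) \<le> R * (1 + real d) * dt * \<gamma> ^ n"
    using dropV_bounds[OF S i] ga by (auto simp: abs_mult mult.commute intro!: mult_left_mono)
  show "summable (\<lambda>t. R * (1 + real d) * dt * \<gamma> ^ t)"
    using ga by (intro summable_mult summable_geometric) auto
qed

lemma J_comp:
  assumes S: "sys_graph d B (V, E, z)" and i: "i \<in> V"
  shows "J_root B \<alpha> dt \<gamma> rate lamP lam0 (component (V, E, z) i) \<pi> = - (\<Sum>t. \<gamma> ^ t * drop_at B \<alpha> dt rate lamP lam0 E z \<pi> t V i)"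
proof -
  have cd: "closed_dom B E z V" and fV: "finite V" using sys_closed[OF S] by auto
  have ii: "E\<^sup>*\<^sup>* i i" by simp
  have Ni: "insert i (nbrs E i) \<subseteq> {j. E\<^sup>*\<^sup>* i j}" using comp_reach[OF ii] by auto
  have NV: "insert i (nbrs E i) \<subseteq> V" using cd i by (auto simp: closed_dom_def)
  have "drop_at B \<alpha> dt rate lamP lam0 (compE E i) z \<pi> t (insert i (nbrs (compE E i) i)) i
      = drop_at B \<alpha> dt rate lamP lam0 E z \<pi> t V i" for t
  proof -
    have "drop_at B \<alpha> dt rate lamP lam0 (compE E i) z \<pi> t (insert i (nbrs (compE E i) i)) i
       = drop_at B \<alpha> dt rate lamP lam0 E z \<pi> t (insert i (nbrs E i)) i"
      using comp_drop[OF Ni order_refl, symmetric] comp_nbrs[OF ii] by simp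
    also have "\<dots> = drop_at B \<alpha> dt rate lamP lam0 E z \<pi> t V i"
      by (rule drop_marg[OF cd fV order_refl order_refl NV, symmetric])
    finally show ?thesis .
  qed
  then show ?thesis by (simp add: component_eq J_root_def)
qed

definition C0 :: "nat \<Rightarrow> real" where "C0 d = R * (1 + real d) * dt / (1 - \<gamma>)"

definition fJ :: "nat \<Rightarrow> rgraph \<Rightarrow> real" where
  "fJ d G = max (- C0 d) (J_root B \<alpha> dt \<gamma> rate lamP lam0 G \<pi>)"

lemma J_comp_bounds:
  assumes S: "sys_graph d B (V, E, z)" and i: "i \<in> V"
  shows "- C0 d \<le> J_root B \<alpha> dt \<gamma> rate lamP lam0 (component (V, E, z) i) \<pi>"
proof -
  let ?c = "R * (1 + real d) * dt"
  have s: "summable (\<lambda>t. \<gamma> ^ t * drop_at B \<alpha> dt rate lamP lam0 E z \<pi> t V i)" by (rule dropV_summable[OF S i])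
  have sg: "summable (\<lambda>t. ?c * \<gamma> ^ t)" using ga by (intro summable_mult summable_geometric) auto
  have "(\<Sum>t. \<gamma> ^ t * drop_at B \<alpha> dt rate lamP lam0 E z \<pi> t V i) \<le> (\<Sum>t. ?c * \<gamma> ^ t)"
    using dropV_bounds[OF S i] ga by (intro suminf_le s sg) (auto simp: mult.commute intro!: mult_left_mono)
  also have "\<dots> = C0 d" using ga by (simp add: suminf_mult suminf_geometric C0_def)
  finally show ?thesis unfolding J_comp[OF S i] by simp
qed

lemma J_graph_lw:
  assumes S: "sys_graph d B G"
  shows "J_graph B \<alpha> dt \<gamma> rate lamP lam0 G \<pi> = lw_avg (fJ d) G"
proof -
  obtain V E z where G: "G = (V, E, z)" by (cases G) auto
  let ?D = "\<lambda>i t. \<gamma> ^ t * drop_at B \<alpha> dt rate lamP lam0 E z \<pi> t V i"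
  have fc: "fJ d (component (V, E, z) i) = - (\<Sum>t. ?D i t)" if "i \<in> V" for i
    using J_comp_bounds[OF S[unfolded G] that] J_comp[OF S[unfolded G] that] unfolding fJ_def by simp
  have sm: "summable (?D i)" if "i \<in> V" for i by (rule dropV_summable[OF S[unfolded G] that])
  have e1: "lw_avg (fJ d) G = (\<Sum>i\<in>V. - (\<Sum>t. ?D i t)) / real (card V)"
    unfolding lw_avg_def G by (simp add: fc cong: sum.cong)
  have e2: "(\<Sum>i\<in>V. - (\<Sum>t. ?D i t)) = - (\<Sum>t. \<Sum>i\<in>V. ?D i t)"
    using suminf_sum[OF sm, of V] by (simp add: sum_negf)
  have e3: "(\<Sum>t. \<Sum>i\<in>V. ?D i t) / real (card V) = (\<Sum>t. (\<Sum>i\<in>V. ?D i t) / real (card V))"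
    by (rule suminf_divide[symmetric]) (intro summable_sum sm)
  have "J_graph B \<alpha> dt \<gamma> rate lamP lam0 G \<pi> = - (\<Sum>t. (\<Sum>i\<in>V. ?D i t) / real (card V))"
    unfolding J_graph_def G by (simp add: sum_distrib_left)
  then show ?thesis using e1 e2 e3 by simp
qed

end

lemma comp_in_V: "E\<^sup>*\<^sup>* i j \<Longrightarrow> i \<in> V \<Longrightarrow> (\<forall>u v. E u v \<longrightarrow> u \<in> V \<and> v \<in> V) \<Longrightarrow> j \<in> V"
  by (induction rule: rtranclp_induct) auto

lemma comp_gstar:
  assumes S: "sys_graph d B (V, E, z)" and i: "i \<in> V"
  shows "component (V, E, z) i \<in> Gstar_set B"
proof -
  have wf: "wf_lf B (V, E, z)" using S by (simp add: sys_graph_def)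
  have ev: "\<forall>u v. E u v \<longrightarrow> u \<in> V \<and> v \<in> V" and sym: "\<forall>u v. E u v \<longrightarrow> E v u" and irr: "\<forall>u. \<not> E u u"
    and fin: "\<forall>u\<in>V. finite (nbrs E u)" and zb: "\<forall>u\<in>V. z u \<le> B"
    using wf by (simp_all add: wf_lf_def)
  let ?C = "{j. E\<^sup>*\<^sup>* i j}" and ?E = "compE E i"
  have CV: "j \<in> V" if "E\<^sup>*\<^sup>* i j" for j using comp_in_V[OF that i ev] .
  have c1: "\<forall>u v. ?E u v \<longrightarrow> u \<in> ?C \<and> v \<in> ?C" by (simp add: compE_def)
  have c2: "\<forall>u v. ?E u v \<longrightarrow> ?E v u" using sym unfolding compE_def by blast
  have c3: "\<forall>u. \<not> ?E u u" using irr unfolding compE_def by blast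
  have c4: "\<forall>u\<in>?C. finite (nbrs ?E u)"
  proof
    fix u assume "u \<in> ?C"
    then have u: "E\<^sup>*\<^sup>* i u" by simp
    show "finite (nbrs ?E u)" unfolding comp_nbrs[OF u] using fin CV[OF u] by blast
  qed
  have c5: "\<forall>u\<in>?C. z u \<le> B" using zb CV by blast
  have c6: "i \<in> ?C" by simp
  have "wf_lf B (?C, ?E, z)" unfolding wf_lf_def prod.case using c1 c2 c3 c4 c5 by blast
  then show ?thesis unfolding component_eq Gstar_set_def using c6 by blast
qed

lemma lw_avg_bound:
  assumes S: "sys_graph d B G" and bd: "\<forall>H\<in>Gstar_set B. \<bar>f H\<bar> \<le> K"
  shows "\<bar>lw_avg f G\<bar> \<le> K"
proof -
  obtain V E z where G: "G = (V, E, z)" by (cases G) auto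
  have fV: "finite V" "V \<noteq> {}" using S G by (auto simp: sys_graph_def)
  have fi: "\<bar>f (component G i)\<bar> \<le> K" if "i \<in> V" for i
    using bd comp_gstar[OF S[unfolded G] that] G by blast
  have "\<bar>\<Sum>i\<in>V. f (component G i)\<bar> \<le> (\<Sum>i\<in>V. \<bar>f (component G i)\<bar>)" by (rule sum_abs)
  also have "\<dots> \<le> (\<Sum>i\<in>V. K)" using fi by (rule sum_mono)
  also have "\<dots> = real (card V) * K" by simp
  finally have s: "\<bar>\<Sum>i\<in>V. f (component G i)\<bar> \<le> real (card V) * K" .
  have cp: "real (card V) > 0" using fV by auto
  have "\<bar>lw_avg f G\<bar> = \<bar>\<Sum>i\<in>V. f (component G i)\<bar> / real (card V)"
    unfolding lw_avg_def G using cp by (simp add: abs_divide)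
  also have "\<dots> \<le> K" using s cp by (simp add: divide_le_eq mult.commute)
  finally show ?thesis .
qed

lemma lw_lim:
  assumes lwc: "lwc_prob B P M" and sup: "\<forall>n. \<forall>G\<in>set_pmf (P n). sys_graph d B G"
    and cont: "lw_continuous B f" and bd: "\<forall>G\<in>Gstar_set B. \<bar>f G\<bar> \<le> K" and K0: "K \<ge> 0"
  shows "(\<lambda>n. measure_pmf.expectation (P n) (\<lambda>G. lw_avg f G)) \<longlonglongrightarrow> integral\<^sup>L M f"
proof -
  define c where "c = integral\<^sup>L M f"
  have bnd: "lw_bounded B f" using bd unfolding lw_bounded_def by blast
  have pc: "\<And>\<epsilon>. \<epsilon> > 0 \<Longrightarrow> (\<lambda>n. measure_pmf.prob (P n) {G. \<bar>lw_avg f G - c\<bar> > \<epsilon>}) \<longlonglongrightarrow> 0"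
    using lwc cont bnd unfolding lwc_prob_def c_def by blast
  define Kc where "Kc = K + \<bar>c\<bar>"
  have Kc0: "Kc \<ge> 0" using K0 by (simp add: Kc_def)
  have key: "\<bar>measure_pmf.expectation (P n) (\<lambda>G. lw_avg f G) - c\<bar> \<le> \<epsilon> + Kc * measure_pmf.prob (P n) {G. \<bar>lw_avg f G - c\<bar> > \<epsilon>}"
    if e: "\<epsilon> > 0" for n \<epsilon>
  proof -
    let ?A = "{G. \<bar>lw_avg f G - c\<bar> > \<epsilon>}"
    have AEb: "AE G in measure_pmf (P n). \<bar>lw_avg f G\<bar> \<le> K"
      using sup lw_avg_bound[OF _ bd] by (intro AE_pmfI) blast
    have iX: "integrable (measure_pmf (P n)) (\<lambda>G. lw_avg f G)"
      by (rule measure_pmf.integrable_const_bound[OF _ ]) (use AEb in auto)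
    have iY: "integrable (measure_pmf (P n)) (\<lambda>G. \<bar>lw_avg f G - c\<bar>)"
      by (rule measure_pmf.integrable_const_bound[where B = Kc]) (use AEb in \<open>auto simp: Kc_def elim!: eventually_mono\<close>)
    have iZ: "integrable (measure_pmf (P n)) (\<lambda>G. \<epsilon> + Kc * indicator ?A G)"
      by (rule measure_pmf.integrable_const_bound[where B = "\<bar>\<epsilon>\<bar> + \<bar>Kc\<bar>"]) (auto simp: indicator_def)
    have "measure_pmf.expectation (P n) (\<lambda>G. lw_avg f G) - c = measure_pmf.expectation (P n) (\<lambda>G. lw_avg f G - c)"
      using iX by (simp add: integral_diff measure_pmf.prob_space)
    then have "\<bar>measure_pmf.expectation (P n) (\<lambda>G. lw_avg f G) - c\<bar> \<le> measure_pmf.expectation (P n) (\<lambda>G. \<bar>lw_avg f G - c\<bar>)"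
      using integral_norm_bound[of "measure_pmf (P n)" "\<lambda>G. lw_avg f G - c"] by simp
    also have "\<dots> \<le> measure_pmf.expectation (P n) (\<lambda>G. \<epsilon> + Kc * indicator ?A G)"
    proof (rule integral_mono_AE[OF iY iZ])
      show "AE G in measure_pmf (P n). \<bar>lw_avg f G - c\<bar> \<le> \<epsilon> + Kc * indicator ?A G"
        using AEb
      proof (rule eventually_mono)
        fix G assume "\<bar>lw_avg f G\<bar> \<le> K"
        then show "\<bar>lw_avg f G - c\<bar> \<le> \<epsilon> + Kc * indicator ?A G"
          using e by (auto simp: indicator_def Kc_def)
      qed
    qed
    also have "\<dots> = \<epsilon> + Kc * measure_pmf.prob (P n) ?A"
    proof -
      have i1: "integrable (measure_pmf (P n)) (\<lambda>G. \<epsilon>)"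
        by (rule measure_pmf.integrable_const_bound[where B = "\<bar>\<epsilon>\<bar>"]) auto
      have i2: "integrable (measure_pmf (P n)) (\<lambda>G. Kc * indicator ?A G)"
        by (rule measure_pmf.integrable_const_bound[where B = "\<bar>Kc\<bar>"]) (auto simp: indicator_def)
      have "measure_pmf.expectation (P n) (\<lambda>G. \<epsilon> + Kc * indicator ?A G)
          = measure_pmf.expectation (P n) (\<lambda>G. \<epsilon>) + measure_pmf.expectation (P n) (\<lambda>G. Kc * indicator ?A G)"
        by (rule Bochner_Integration.integral_add[OF i1 i2])
      also have "measure_pmf.expectation (P n) (\<lambda>G. \<epsilon>) = \<epsilon>"
        by (simp add: measure_pmf.prob_space)
      also have "measure_pmf.expectation (P n) (\<lambda>G. Kc * indicator ?A G) = Kc * measure_pmf.expectation (P n) (indicator ?A)"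
        by (rule integral_mult_right_zero)
      also have "measure_pmf.expectation (P n) (indicator ?A) = measure_pmf.prob (P n) ?A"
        by simp
      finally show ?thesis .
    qed
    finally show ?thesis .
  qed
  show ?thesis unfolding c_def[symmetric]
  proof (rule tendstoI)
    fix e :: real assume e: "e > 0"
    have "e / (2 * (Kc + 1)) > 0" using e Kc0 by simp
    have ev: "\<forall>\<^sub>F n in sequentially. measure_pmf.prob (P n) {G. \<bar>lw_avg f G - c\<bar> > e / 2} < e / (2 * (Kc + 1))"
    proof -
      have h: "e / 2 > 0" using e by simp
      show ?thesis by (rule order_tendstoD(2)[OF pc[OF h]]) fact
    qed
    show "\<forall>\<^sub>F n in sequentially. dist (measure_pmf.expectation (P n) (\<lambda>G. lw_avg f G)) c < e"
      using ev
    proof (rule eventually_mono)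
      fix n assume p: "measure_pmf.prob (P n) {G. \<bar>lw_avg f G - c\<bar> > e / 2} < e / (2 * (Kc + 1))"
      have "Kc * measure_pmf.prob (P n) {G. \<bar>lw_avg f G - c\<bar> > e / 2} \<le> Kc * (e / (2 * (Kc + 1)))"
        using p Kc0 by (intro mult_left_mono) auto
      also have "\<dots> < e / 2" using Kc0 e by (simp add: field_simps)
      finally show "dist (measure_pmf.expectation (P n) (\<lambda>G. lw_avg f G)) c < e"
        using key[of "e / 2" n] e by (simp add: dist_real_def)
    qed
  qed
qed

context qsys
begin

lemma C0_nonneg: "C0 d \<ge> 0"
  unfolding C0_def using R_nonneg dt ga by (intro divide_nonneg_pos mult_nonneg_nonneg) auto

lemma fJ_cont: "lw_continuous B (fJ d)"
  unfolding lw_continuous_def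
proof (intro ballI allI impI)
  fix G :: rgraph and \<epsilon> :: real assume G: "G \<in> Gstar_set B" and e: "\<epsilon> > 0"
  obtain k where k: "\<forall>H\<in>Gstar_set B. ball_iso k G H \<longrightarrow>
     \<bar>J_root B \<alpha> dt \<gamma> rate lamP lam0 H \<pi> - J_root B \<alpha> dt \<gamma> rate lamP lam0 G \<pi>\<bar> < \<epsilon>"
    using J_root_cont[OF G e] by blast
  show "\<exists>k. \<forall>H\<in>Gstar_set B. ball_iso k G H \<longrightarrow> \<bar>fJ d H - fJ d G\<bar> < \<epsilon>"
  proof (intro exI[of _ k] ballI impI)
    fix H assume "H \<in> Gstar_set B" "ball_iso k G H"
    then have "\<bar>J_root B \<alpha> dt \<gamma> rate lamP lam0 H \<pi> - J_root B \<alpha> dt \<gamma> rate lamP lam0 G \<pi>\<bar> < \<epsilon>" using k by blast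
    then show "\<bar>fJ d H - fJ d G\<bar> < \<epsilon>" unfolding fJ_def by linarith
  qed
qed

lemma fJ_bd: "\<forall>G\<in>Gstar_set B. \<bar>fJ d G\<bar> \<le> C0 d"
proof
  fix G assume "G \<in> Gstar_set B"
  then have "J_root B \<alpha> dt \<gamma> rate lamP lam0 G \<pi> \<le> 0" using J_root_bounds by blast
  then show "\<bar>fJ d G\<bar> \<le> C0 d" using C0_nonneg[of d] unfolding fJ_def by linarith
qed

lemma J_conv:
  assumes sup: "\<forall>n. \<forall>G\<in>set_pmf (P n). sys_graph d B G" and pM: "prob_space M"
    and sM: "sets M = sets (Gstar_space B)" and lwc: "lwc_prob B P M"
  shows "(\<lambda>n. J_fin B \<alpha> dt \<gamma> rate lamP lam0 (P n) \<pi>) \<longlonglongrightarrow> J_lim B \<alpha> dt \<gamma> rate lamP lam0 M \<pi>"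
proof -
  interpret M: prob_space M by (rule pM)
  have meq: "measurable M borel = measurable (Gstar_space B) borel"
    by (rule measurable_cong_sets[OF sM refl])
  have spM: "space M = Gstar_set B" using sets_eq_imp_space_eq[OF sM] space_Gstar by simp
  have lim: "(\<lambda>n. measure_pmf.expectation (P n) (\<lambda>G. lw_avg (fJ d) G)) \<longlonglongrightarrow> integral\<^sup>L M (fJ d)"
    by (rule lw_lim[OF lwc sup fJ_cont fJ_bd C0_nonneg])
  have e1: "J_fin B \<alpha> dt \<gamma> rate lamP lam0 (P n) \<pi> = measure_pmf.expectation (P n) (\<lambda>G. lw_avg (fJ d) G)" for n
    unfolding J_fin_def
    by (rule integral_cong_AE) (auto intro!: AE_pmfI J_graph_lw sup[rule_format])
  \<comment> \<open>degree at the root is at most d almost surely\<close>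
  have gm: "gdeg d \<in> borel_measurable M" unfolding meq by (rule gdeg_meas)
  have gi: "integrable M (gdeg d)"
    by (rule M.integrable_const_bound[where B = 1, OF _ gm]) (auto simp: gdeg_def)
  have g0: "integral\<^sup>L M (gdeg d) = 0"
  proof (rule ccontr)
    define c where "c = integral\<^sup>L M (gdeg d)"
    assume "integral\<^sup>L M (gdeg d) \<noteq> 0"
    then have cp: "\<bar>c\<bar> / 2 > 0" unfolding c_def by simp
    have t0: "(\<lambda>n. measure_pmf.prob (P n) {G. \<bar>lw_avg (gdeg d) G - c\<bar> > \<bar>c\<bar> / 2}) \<longlonglongrightarrow> 0"
      using lwc gdeg_cont gdeg_bounded cp unfolding lwc_prob_def c_def by blast
    have "measure_pmf.prob (P n) {G. \<bar>lw_avg (gdeg d) G - c\<bar> > \<bar>c\<bar> / 2} = 1" for n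
    proof (subst measure_pmf.prob_eq_1)
      show "AE x in measure_pmf (P n). x \<in> {G. \<bar>c\<bar> / 2 < \<bar>lw_avg (gdeg d) G - c\<bar>}"
      proof (rule AE_pmfI)
        fix G assume "G \<in> set_pmf (P n)"
        then have "lw_avg (gdeg d) G = 0" using sup lw_avg_gdeg by blast
        then show "G \<in> {G. \<bar>c\<bar> / 2 < \<bar>lw_avg (gdeg d) G - c\<bar>}" using cp by simp
      qed
    qed auto
    then have "(\<lambda>n. measure_pmf.prob (P n) {G. \<bar>lw_avg (gdeg d) G - c\<bar> > \<bar>c\<bar> / 2}) \<longlonglongrightarrow> 1" by simp
    with t0 show False using LIMSEQ_unique by fastforce
  qed
  have AEg: "AE G in M. gdeg d G = 0"
    using integral_nonneg_eq_0_iff_AE[OF gi] g0 by (auto simp: gdeg_def)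
  have AEf: "AE G in M. fJ d G = J_root B \<alpha> dt \<gamma> rate lamP lam0 G \<pi>"
    using AEg
  proof (rule AE_mp[OF _ AE_I2[OF impI]])
    fix G assume G: "G \<in> space M" and g: "gdeg d G = 0"
    have Gs: "G \<in> Gstar_set B" using G spM by simp
    have rd: "rdeg G \<le> d" using g by (simp add: gdeg_def split: if_splits)
    have "R * (1 + real (rdeg G)) * dt / (1 - \<gamma>) \<le> C0 d"
      unfolding C0_def using rd R_nonneg dt ga by (intro divide_right_mono mult_right_mono mult_left_mono) auto
    then show "fJ d G = J_root B \<alpha> dt \<gamma> rate lamP lam0 G \<pi>"
      using J_root_bounds[OF Gs] unfolding fJ_def by linarith
  qed
  have Jm: "(\<lambda>G. J_root B \<alpha> dt \<gamma> rate lamP lam0 G \<pi>) \<in> borel_measurable M" unfolding meq by (rule J_root_meas)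
  have fm: "fJ d \<in> borel_measurable M" unfolding fJ_def using Jm by measurable
  have "integral\<^sup>L M (fJ d) = J_lim B \<alpha> dt \<gamma> rate lamP lam0 M \<pi>"
    unfolding J_lim_def by (rule integral_cong_AE[OF fm Jm AEf])
  then show ?thesis using lim e1 by simp
qed

end

theorem corollary2p2:
  fixes d B :: nat and \<alpha> dt \<gamma> :: real
    and rate :: "'l::finite \<Rightarrow> real" and lamP :: "'l \<Rightarrow> 'l \<Rightarrow> real" and lam0 :: "'l \<Rightarrow> real"
    and P :: "nat \<Rightarrow> mgraph pmf" and M :: "rgraph measure"
    and K :: nat and pol :: "nat \<Rightarrow> nat \<Rightarrow> nat \<Rightarrow> real" and i :: nat
  assumes "\<alpha> > 0" and "dt > 0" and "0 < \<gamma>" and "\<gamma> < 1"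
    and "\<forall>l. rate l > 0"
    and "\<forall>l l'. lamP l l' \<ge> 0" and "\<forall>l. (\<Sum>l'\<in>UNIV. lamP l l') = 1"
    and "\<forall>l. lam0 l \<ge> 0" and "(\<Sum>l\<in>UNIV. lam0 l) = 1"
    and "\<forall>n. \<forall>G\<in>set_pmf (P n). sys_graph d B G"
    and "prob_space M" and "sets M = sets (Gstar_space B)"
    and "lwc_prob B P M"
    and "\<forall>k<K. \<forall>t s. s \<le> B \<longrightarrow> 0 \<le> pol k t s \<and> pol k t s \<le> 1"
    and "inj_on (\<lambda>j. J_lim B \<alpha> dt \<gamma> rate lamP lam0 M (pol j)) {..<K}"
    and "i < K"
    and "\<forall>j<K. J_lim B \<alpha> dt \<gamma> rate lamP lam0 M (pol j) \<le> J_lim B \<alpha> dt \<gamma> rate lamP lam0 M (pol i)"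
  shows "\<exists>n'. \<forall>n>n'. \<forall>j<K.
           J_fin B \<alpha> dt \<gamma> rate lamP lam0 (P n) (pol j) \<le> J_fin B \<alpha> dt \<gamma> rate lamP lam0 (P n) (pol i)"
proof -
  note a = assms
  define R where "R = (\<Sum>l\<in>UNIV. rate l)"
  have rR: "\<forall>l. rate l \<le> R"
  proof
    fix l show "rate l \<le> R" unfolding R_def
      by (rule member_le_sum) (use a(5) in \<open>auto intro: less_imp_le\<close>)
  qed
  have r0: "\<forall>l. rate l \<ge> 0" using a(5) by (auto intro: less_imp_le)
  have conv: "(\<lambda>n. J_fin B \<alpha> dt \<gamma> rate lamP lam0 (P n) (pol j)) \<longlonglongrightarrow> J_lim B \<alpha> dt \<gamma> rate lamP lam0 M (pol j)"
    if j: "j < K" for j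
  proof -
    have "qsys B \<alpha> dt \<gamma> rate lamP lam0 (pol j) R"
      unfolding qsys_def using a(1-4,6-9,14) r0 rR j by blast
    from qsys.J_conv[OF this a(10-13)] show ?thesis .
  qed
  let ?JL = "\<lambda>j. J_lim B \<alpha> dt \<gamma> rate lamP lam0 M (pol j)"
  let ?JF = "\<lambda>n j. J_fin B \<alpha> dt \<gamma> rate lamP lam0 (P n) (pol j)"
  have ev: "\<forall>j\<in>{j. j < K \<and> j \<noteq> i}. eventually (\<lambda>n. ?JF n j < ?JF n i) sequentially"
  proof
    fix j assume "j \<in> {j. j < K \<and> j \<noteq> i}"
    then have j: "j < K" "j \<noteq> i" by auto
    have "?JL j \<noteq> ?JL i" using a(15) a(16) j by (auto simp: inj_on_def)
    then have lt: "?JL j - ?JL i < 0" using a(17) j by force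
    have "(\<lambda>n. ?JF n j - ?JF n i) \<longlonglongrightarrow> ?JL j - ?JL i"
      by (intro tendsto_diff conv j a(16))
    from order_tendstoD(2)[OF this lt] show "eventually (\<lambda>n. ?JF n j < ?JF n i) sequentially"
      by simp
  qed
  have "eventually (\<lambda>n. \<forall>j\<in>{j. j < K \<and> j \<noteq> i}. ?JF n j < ?JF n i) sequentially"
    by (rule eventually_ball_finite[OF _ ev]) simp
  then obtain N where N: "\<forall>n\<ge>N. \<forall>j\<in>{j. j < K \<and> j \<noteq> i}. ?JF n j < ?JF n i"
    unfolding eventually_sequentially by blast
  show ?thesis
  proof (intro exI[of _ N] allI impI)
    fix n j assume "N < n" "j < K"
    then show "?JF n j \<le> ?JF n i" using N by (cases "j = i") (auto intro: less_imp_le)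
  qed
qed

end
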